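(* Let $0<\epsilon,\delta,\lambda<1$, $F=1-\epsilon$, $\nu=1-\lambda$, $k_+=\lceil\log_\lambda\delta\rceil$, $k_-=\lfloor\log_\lambda\delta\rfloor$, and for nonnegative integers $k$ define $$\tilde N(\epsilon,\delta,\lambda,k)=\frac{k\nu^2\delta F+\lambda^{k+1}+\lambda\delta(k\nu-1)}{\lambda\nu\delta\epsilon},\qquad \tilde N_\pm(\epsilon,\delta,\lambda)=\tilde N(\epsilon,\delta,\lambda,k_\pm).$$ Then $$N(\epsilon,\delta,\lambda)=\Big\lceil\min_{k\in\mathbb Z_{\ge0}}\tilde N(\epsilon,\delta,\lambda,k)\Big\rceil=\lceil\tilde N(\epsilon,\delta,\lambda,k^* )\rceil=\big\lceil\min\{\tilde N_+(\epsilon,\delta,\lambda),\tilde N_-(\epsilon,\delta,\lambda)\}\big\rceil=\begin{cases}\lceil\tilde N_-(\epsilon,\delta,\lambda)\rceil,&\delta\ge\frac{\lambda^{k_+}}{F+\lambda\epsilon},\\ \lceil\tilde N_+(\epsilon,\delta,\lambda)\rceil,&\delta\le\frac{\lambda^{k_+}}{F+\lambda\epsilon},\end{cases}$$ where $k^*$ is the largest integer $k$ satisfying $\delta\le\lambda^k/(F\nu+\lambda)=\lambda^k/(F+\lambda\epsilon)$, and $k^*$ is equal to either $k_+$ or $k_-$.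
   Context: Let $\mathcal H$ be a Hilbert space of finite dimension $D\ge 2$ and $|\Psi\rangle\in\mathcal H$ a unit vector. For $0\le\lambda<1$ let $\Omega_\lambda=|\Psi\rangle\langle\Psi|+\lambda(1-|\Psi\rangle\langle\Psi|)$. For an integer $N\ge1$ and a density operator $\rho$ on $\mathcal H^{\otimes(N+1)}$ put $p_\rho=\mathrm{tr}[(\Omega_\lambda^{\otimes N}\otimes 1)\rho]$ and $f_\rho=\mathrm{tr}[(\Omega_\lambda^{\otimes N}\otimes|\Psi\rangle\langle\Psi|)\rho]$. Define $F(N,\delta,\lambda)=\min\{f_\rho/p_\rho: p_\rho\ge\delta\}$ for $0<\delta\le1$, the minimum over permutation-invariant density operators on $\mathcal H^{\otimes(N+1)}$, and for $0<\epsilon,\delta<1$ let $N(\epsilon,\delta,\lambda)=\min\{N\ge1: F(N,\delta,\lambda)\ge1-\epsilon\}$ (the minimum number of tests needed to verify $|\Psi\rangle$ within infidelity $\epsilon$ and significance level $\delta$ in the adversarial scenario). *)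

theory Defs
  imports "HOL-Analysis.Analysis" "HOL-Combinatorics.Permutations"
begin

text \<open>Concrete model: \<H> = \<complex>^D with basis indexed by {..<D}; the space
  \<H>^(tensor n) has basis indexed by lists of length n over {..<D}.
  Operators on \<H>^(tensor n) are represented by their matrix entries
  (functions of two basis indices).\<close>

definition idx :: "nat \<Rightarrow> nat \<Rightarrow> nat list set" where
  "idx D n = {xs. length xs = n \<and> set xs \<subseteq> {..<D}}"

definition trAB :: "nat \<Rightarrow> nat \<Rightarrow> (nat list \<Rightarrow> nat list \<Rightarrow> complex)
   \<Rightarrow> (nat list \<Rightarrow> nat list \<Rightarrow> complex) \<Rightarrow> complex" where
  "trAB D n A \<rho> = (\<Sum>x\<in>idx D n. \<Sum>y\<in>idx D n. A x y * \<rho> y x)"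

definition density_op :: "nat \<Rightarrow> nat \<Rightarrow> (nat list \<Rightarrow> nat list \<Rightarrow> complex) \<Rightarrow> bool" where
  "density_op D n \<rho> \<longleftrightarrow>
     (\<forall>v :: nat list \<Rightarrow> complex.
        (\<Sum>x\<in>idx D n. \<Sum>y\<in>idx D n. cnj (v x) * \<rho> x y * v y) \<in> \<real> \<and>
        0 \<le> Re (\<Sum>x\<in>idx D n. \<Sum>y\<in>idx D n. cnj (v x) * \<rho> x y * v y)) \<and>
     (\<Sum>x\<in>idx D n. \<rho> x x) = 1"

definition perm_idx :: "nat \<Rightarrow> (nat \<Rightarrow> nat) \<Rightarrow> nat list \<Rightarrow> nat list" where
  "perm_idx n \<sigma> xs = map (\<lambda>i. xs ! \<sigma> i) [0..<n]"

definition perm_inv :: "nat \<Rightarrow> nat \<Rightarrow> (nat list \<Rightarrow> nat list \<Rightarrow> complex) \<Rightarrow> bool" where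
  "perm_inv D n \<rho> \<longleftrightarrow>
     (\<forall>\<sigma>. \<sigma> permutes {..<n} \<longrightarrow>
        (\<forall>x\<in>idx D n. \<forall>y\<in>idx D n. \<rho> (perm_idx n \<sigma> x) (perm_idx n \<sigma> y) = \<rho> x y))"

definition proj :: "(nat \<Rightarrow> complex) \<Rightarrow> nat \<Rightarrow> nat \<Rightarrow> complex" where
  "proj \<Psi> i j = \<Psi> i * cnj (\<Psi> j)"

definition Omega :: "(nat \<Rightarrow> complex) \<Rightarrow> real \<Rightarrow> nat \<Rightarrow> nat \<Rightarrow> complex" where
  "Omega \<Psi> lam i j = proj \<Psi> i j + of_real lam * ((if i = j then 1 else 0) - proj \<Psi> i j)"

definition test_op :: "(nat \<Rightarrow> complex) \<Rightarrow> real \<Rightarrow> nat \<Rightarrow> (nat \<Rightarrow> nat \<Rightarrow> complex)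
    \<Rightarrow> nat list \<Rightarrow> nat list \<Rightarrow> complex" where
  "test_op \<Psi> lam N B x y = (\<Prod>i<N. Omega \<Psi> lam (x ! i) (y ! i)) * B (x ! N) (y ! N)"

definition p_rho :: "nat \<Rightarrow> (nat \<Rightarrow> complex) \<Rightarrow> real \<Rightarrow> nat \<Rightarrow> (nat list \<Rightarrow> nat list \<Rightarrow> complex) \<Rightarrow> real" where
  "p_rho D \<Psi> lam N \<rho> = Re (trAB D (N+1) (test_op \<Psi> lam N (\<lambda>i j. if i = j then 1 else 0)) \<rho>)"

definition f_rho :: "nat \<Rightarrow> (nat \<Rightarrow> complex) \<Rightarrow> real \<Rightarrow> nat \<Rightarrow> (nat list \<Rightarrow> nat list \<Rightarrow> complex) \<Rightarrow> real" where
  "f_rho D \<Psi> lam N \<rho> = Re (trAB D (N+1) (test_op \<Psi> lam N (proj \<Psi>)) \<rho>)"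

text \<open>F(N,delta,lambda): the minimum (written as infimum) over permutation-invariant
  density operators with p_rho \<ge> delta\<close>
definition Fver :: "nat \<Rightarrow> (nat \<Rightarrow> complex) \<Rightarrow> nat \<Rightarrow> real \<Rightarrow> real \<Rightarrow> real" where
  "Fver D \<Psi> N \<delta> lam = Inf {f_rho D \<Psi> lam N \<rho> / p_rho D \<Psi> lam N \<rho> | \<rho>.
      density_op D (N+1) \<rho> \<and> perm_inv D (N+1) \<rho> \<and> p_rho D \<Psi> lam N \<rho> \<ge> \<delta>}"

definition Nver :: "nat \<Rightarrow> (nat \<Rightarrow> complex) \<Rightarrow> real \<Rightarrow> real \<Rightarrow> real \<Rightarrow> nat" where
  "Nver D \<Psi> \<epsilon> \<delta> lam = (LEAST N. N \<ge> 1 \<and> Fver D \<Psi> N \<delta> lam \<ge> 1 - \<epsilon>)"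

definition Ntil :: "real \<Rightarrow> real \<Rightarrow> real \<Rightarrow> nat \<Rightarrow> real" where
  "Ntil \<epsilon> \<delta> lam k =
     (real k * (1 - lam)^2 * \<delta> * (1 - \<epsilon>) + lam ^ (k+1) + lam * \<delta> * (real k * (1 - lam) - 1))
     / (lam * (1 - lam) * \<delta> * \<epsilon>)"

end

theory Submission
  imports Defs
begin

lemma Ntil_diff:
  assumes "0 < \<epsilon>" "0 < \<delta>" "0 < lam" "lam < 1"
  shows "Ntil \<epsilon> \<delta> lam (Suc k) - Ntil \<epsilon> \<delta> lam k
       = (\<delta> * ((1 - \<epsilon>) + lam * \<epsilon>) - lam ^ Suc k) / (lam * \<delta> * \<epsilon>)"
proof -
  define d where "d = lam * (1 - lam) * \<delta> * \<epsilon>"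
  have d0: "d \<noteq> 0" using assms unfolding d_def by simp
  have "Ntil \<epsilon> \<delta> lam (Suc k) - Ntil \<epsilon> \<delta> lam k
     = ((real (Suc k) * (1 - lam)^2 * \<delta> * (1 - \<epsilon>) + lam ^ (Suc k+1) + lam * \<delta> * (real (Suc k) * (1 - lam) - 1))
       - (real k * (1 - lam)^2 * \<delta> * (1 - \<epsilon>) + lam ^ (k+1) + lam * \<delta> * (real k * (1 - lam) - 1))) / d"
    unfolding Ntil_def d_def by (simp add: diff_divide_distrib)
  also have "\<dots> = ((1 - lam) * (\<delta> * ((1 - \<epsilon>) + lam * \<epsilon>) - lam ^ Suc k)) / d"
    by (simp add: algebra_simps power2_eq_square)
  also have "\<dots> = (\<delta> * ((1 - \<epsilon>) + lam * \<epsilon>) - lam ^ Suc k) / (lam * \<delta> * \<epsilon>)"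
    unfolding d_def using assms by simp
  finally show ?thesis .
qed


lemma Ntil_min:
  assumes "0 < \<epsilon>" "0 < \<delta>" "0 < lam" "lam < 1"
    and ks1: "\<delta> * ((1 - \<epsilon>) + lam * \<epsilon>) \<le> lam ^ ks"
    and ks2: "lam ^ Suc ks < \<delta> * ((1 - \<epsilon>) + lam * \<epsilon>)"
  shows "Ntil \<epsilon> \<delta> lam ks \<le> Ntil \<epsilon> \<delta> lam k"
proof -
  let ?c = "(1 - \<epsilon>) + lam * \<epsilon>"
  have pos: "0 < lam * \<delta> * \<epsilon>" using assms by simp
  have up: "Ntil \<epsilon> \<delta> lam ks \<le> Ntil \<epsilon> \<delta> lam (ks + d)" for d
  proof (induction d)
    case 0 then show ?case by simp
  next
    case (Suc d)
    have "lam ^ Suc (ks + d) \<le> lam ^ Suc ks"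
      using assms by (intro power_decreasing) auto
    then have "0 \<le> (\<delta> * ?c - lam ^ Suc (ks + d)) / (lam * \<delta> * \<epsilon>)"
      using ks2 pos by (intro divide_nonneg_pos) auto
    then show ?case using Suc Ntil_diff[OF assms(1-4), of "ks + d"] by simp
  qed
  have down: "d \<le> ks \<Longrightarrow> Ntil \<epsilon> \<delta> lam ks \<le> Ntil \<epsilon> \<delta> lam (ks - d)" for d
  proof (induction d)
    case 0 then show ?case by simp
  next
    case (Suc d)
    have e: "Suc (ks - Suc d) = ks - d" using Suc.prems by simp
    have "lam ^ ks \<le> lam ^ (ks - d)"
      using assms by (intro power_decreasing) auto
    then have "(\<delta> * ?c - lam ^ Suc (ks - Suc d)) / (lam * \<delta> * \<epsilon>) \<le> 0"
      using ks1 pos e by (intro divide_nonpos_pos) auto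
    then show ?case using Suc Ntil_diff[OF assms(1-4), of "ks - Suc d"] e by simp
  qed
  show ?thesis
  proof (cases "ks \<le> k")
    case True then show ?thesis using up[of "k - ks"] by simp
  next
    case False then show ?thesis using down[of "ks - k"] by simp
  qed
qed


lemma kstar_facts:
  fixes \<epsilon> \<delta> lam :: real
  assumes "0 < \<epsilon>" "\<epsilon> < 1" "0 < \<delta>" "\<delta> < 1" "0 < lam" "lam < 1"
    and c_def: "c = (1 - \<epsilon>) + lam * \<epsilon>"
    and ks_def: "ks = (GREATEST k::nat. \<delta> \<le> lam ^ k / c)"
    and kp_def: "kp = nat \<lceil>log lam \<delta>\<rceil>"
    and km_def: "km = nat \<lfloor>log lam \<delta>\<rfloor>"
  shows "\<delta> * c \<le> lam ^ ks" "lam ^ Suc ks < \<delta> * c"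
    "\<forall>k::int. \<delta> \<le> lam powr (real_of_int k) / c \<longrightarrow> k \<le> int ks"
    "ks = kp \<or> ks = km"
    "\<delta> \<le> lam ^ kp / c \<Longrightarrow> ks = kp"
    "\<delta> \<ge> lam ^ kp / c \<Longrightarrow> Ntil \<epsilon> \<delta> lam km = Ntil \<epsilon> \<delta> lam ks"
proof -
  have e1: "0 < \<epsilon> * (1 - lam)" "0 < (1 - lam) * (1 - \<epsilon>)" "0 < lam * \<epsilon>" using assms by simp_all
  have c0: "0 < c" "c < 1" "lam < c" using e1 assms unfolding c_def by (simp_all add: algebra_simps)
  have iff: "\<delta> \<le> lam ^ k / c \<longleftrightarrow> \<delta> * c \<le> lam ^ k" for k
    using c0 by (simp add: pos_le_divide_eq)
  obtain n where n: "lam ^ n < \<delta> * c" using real_arch_pow_inv[of "\<delta> * c" lam] c0 assms by auto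
  have bnd: "\<delta> * c \<le> lam ^ k \<Longrightarrow> k \<le> n" for k
  proof (rule ccontr)
    assume "\<delta> * c \<le> lam ^ k" "\<not> k \<le> n"
    then have "lam ^ k \<le> lam ^ n" using assms by (intro power_decreasing) auto
    then show False using n \<open>\<delta> * c \<le> lam ^ k\<close> by simp
  qed
  have "\<delta> * c \<le> lam ^ 0" using c0 assms by (simp add: mult_le_one less_imp_le)
  then have P0: "\<delta> \<le> lam ^ 0 / c" using iff by blast
  have ksP: "\<delta> \<le> lam ^ ks / c" unfolding ks_def
    by (rule GreatestI_nat[where P = "\<lambda>k. \<delta> \<le> lam ^ k / c", OF P0]) (use bnd iff in auto)
  have ksG: "\<delta> \<le> lam ^ k / c \<Longrightarrow> k \<le> ks" for k unfolding ks_def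
    by (rule Greatest_le_nat[where P = "\<lambda>k. \<delta> \<le> lam ^ k / c" and b = n]) (use bnd iff in auto)
  show ks1: "\<delta> * c \<le> lam ^ ks" using ksP iff by simp
  show ks2: "lam ^ Suc ks < \<delta> * c" using ksG[of "Suc ks"] iff by fastforce
  show "\<forall>k::int. \<delta> \<le> lam powr (real_of_int k) / c \<longrightarrow> k \<le> int ks"
  proof (intro allI impI)
    fix k :: int assume h: "\<delta> \<le> lam powr (real_of_int k) / c"
    show "k \<le> int ks"
    proof (cases "k \<le> 0")
      case True then show ?thesis by linarith
    next
      case False
      have "real_of_int k = real (nat k)" using False by simp
      then have "lam powr (real_of_int k) = lam ^ nat k" using assms(5) powr_realpow[of lam "nat k"] by metis
      then have "\<delta> \<le> lam ^ nat k / c" using h by metis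
      then have "nat k \<le> ks" by (rule ksG)
      then show ?thesis using False by linarith
    qed
  qed
  define L where "L = log lam \<delta>"
  have L0: "0 < L" unfolding L_def log_def using assms by (simp add: divide_neg_neg)
  have powL: "lam powr L = \<delta>" unfolding L_def using assms by simp
  have km_le: "real km \<le> L" unfolding km_def L_def[symmetric] using L0 by linarith
  have kp_ge: "L \<le> real kp" unfolding kp_def L_def[symmetric] using L0 by linarith
  have kpkm: "kp \<le> km + 1"
  proof -
    have a: "real_of_int \<lceil>L\<rceil> < L + 1" using ceiling_correct[of L] by linarith
    have b: "L < real_of_int \<lfloor>L\<rfloor> + 1" by (simp add: floor_correct)
    have "\<lceil>L\<rceil> \<le> \<lfloor>L\<rfloor> + 1" using a b by linarith
    moreover have "0 \<le> \<lfloor>L\<rfloor>" using L0 by simp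
    ultimately show ?thesis unfolding kp_def km_def L_def[symmetric] by linarith
  qed
  have lkm: "\<delta> \<le> lam ^ km"
  proof -
    have "lam powr L \<le> lam powr (real km)" using km_le assms by (intro powr_mono') auto
    then show ?thesis using powL assms by (simp add: powr_realpow)
  qed
  have lkp: "lam ^ kp \<le> \<delta>"
  proof -
    have "lam powr (real kp) \<le> lam powr L" using kp_ge assms by (intro powr_mono') auto
    then show ?thesis using powL assms by (simp add: powr_realpow)
  qed
  have "\<delta> * c \<le> lam ^ km" using lkm c0 assms
    using mult_left_le[of c \<delta>] by linarith
  then have kmks: "km \<le> ks" using ksG iff by simp
  have "lam ^ Suc kp < \<delta> * c"
  proof -
    have "lam ^ Suc kp = lam * lam ^ kp" by simp
    also have "\<dots> \<le> lam * \<delta>" using lkp assms by simp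
    also have "\<dots> < c * \<delta>" using c0 assms by simp
    finally show ?thesis by (simp add: mult.commute)
  qed
  have ksle: "ks \<le> kp"
  proof (rule ccontr)
    assume "\<not> ks \<le> kp"
    then have "lam ^ ks \<le> lam ^ Suc kp" using assms by (intro power_decreasing) auto
    then show False using ks1 \<open>lam ^ Suc kp < \<delta> * c\<close> by simp
  qed
  show "ks = kp \<or> ks = km" using kmks ksle kpkm by linarith
  show "\<delta> \<le> lam ^ kp / c \<Longrightarrow> ks = kp" using ksG[of kp] ksle by simp
  assume h: "\<delta> \<ge> lam ^ kp / c"
  show "Ntil \<epsilon> \<delta> lam km = Ntil \<epsilon> \<delta> lam ks"
  proof (cases "ks = km")
    case True then show ?thesis by simp
  next
    case False
    then have kseq: "ks = kp" and kpk: "kp = Suc km" using kmks ksle kpkm by linarith+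
    have "lam ^ kp \<le> \<delta> * c" using h c0 by (simp add: divide_le_eq mult.commute)
    then have "lam ^ Suc km = \<delta> * c" using ks1 kseq kpk by simp
    then have "Ntil \<epsilon> \<delta> lam (Suc km) - Ntil \<epsilon> \<delta> lam km = 0"
      using Ntil_diff[of \<epsilon> \<delta> lam km] assms unfolding c_def by simp
    then show ?thesis using kpk kseq by simp
  qed
qed


definition PP :: "real \<Rightarrow> nat \<Rightarrow> nat \<Rightarrow> real" where
  "PP lam M j = lam ^ j * (real M * lam + real j * (1 - lam))"
definition qq :: "real \<Rightarrow> nat \<Rightarrow> real" where
  "qq lam j = real j * lam ^ j"
definition hh :: "real \<Rightarrow> real \<Rightarrow> nat \<Rightarrow> nat \<Rightarrow> real" where
  "hh \<epsilon> lam M j = \<epsilon> * PP lam M j - qq lam j"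

lemma hh_eq: "hh \<epsilon> lam M j = lam ^ j * (\<epsilon> * real M * lam - real j * (1 - \<epsilon> * (1 - lam)))"
  unfolding hh_def PP_def qq_def by (simp add: algebra_simps)

lemma PP_diff: "PP lam M j - PP lam M (Suc j) = lam ^ j * (1 - lam) * (lam * (real M - 1) + real j * (1 - lam))"
  unfolding PP_def by (simp add: algebra_simps)

lemma DD_pos:
  assumes "0 < lam" "lam < 1" "2 \<le> M"
  shows "0 < PP lam M j - PP lam M (Suc j)"
proof -
  have "real M \<ge> 2" using assms by simp
  then have "0 < lam * (real M - 1)" using assms by simp
  moreover have "0 \<le> real j * (1 - lam)" using assms by simp
  ultimately have s: "0 < lam * (real M - 1) + real j * (1 - lam)" by (rule add_pos_nonneg)
  show ?thesis unfolding PP_diff using assms s by simp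
qed

lemma convex_incr:
  fixes \<epsilon> lam :: real and k M :: nat
  defines "E \<equiv> \<lambda>j. (PP lam M k - PP lam M (Suc k)) * hh \<epsilon> lam M j
     - (PP lam M k - PP lam M (Suc k)) * hh \<epsilon> lam M k
     - (hh \<epsilon> lam M k - hh \<epsilon> lam M (Suc k)) * (PP lam M j - PP lam M k)"
  shows "E (Suc j) - E j = lam ^ j * lam ^ k * lam * (1 - lam)^2 * real M * (real j - real k)"
proof -
  have "E (Suc j) - E j = (qq lam (Suc j) - qq lam j) * (PP lam M (Suc k) - PP lam M k)
      - (PP lam M (Suc j) - PP lam M j) * (qq lam (Suc k) - qq lam k)"
    unfolding E_def hh_def by (simp add: algebra_simps)
  also have "\<dots> = lam ^ j * lam ^ k * lam * (1 - lam)^2 * real M * (real j - real k)"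
    unfolding PP_def qq_def by (simp add: algebra_simps power2_eq_square)
  finally show ?thesis .
qed

lemma convex_hh:
  fixes \<epsilon> lam :: real
  assumes "0 < lam" "lam < 1"
  shows "(PP lam M k - PP lam M (Suc k)) * hh \<epsilon> lam M j \<ge>
     (PP lam M k - PP lam M (Suc k)) * hh \<epsilon> lam M k
     + (hh \<epsilon> lam M k - hh \<epsilon> lam M (Suc k)) * (PP lam M j - PP lam M k)"
proof -
  define E where "E \<equiv> \<lambda>j. (PP lam M k - PP lam M (Suc k)) * hh \<epsilon> lam M j
     - (PP lam M k - PP lam M (Suc k)) * hh \<epsilon> lam M k
     - (hh \<epsilon> lam M k - hh \<epsilon> lam M (Suc k)) * (PP lam M j - PP lam M k)"
  have inc: "E (Suc j) - E j = lam ^ j * lam ^ k * lam * (1 - lam)^2 * real M * (real j - real k)" for j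
    unfolding E_def by (rule convex_incr)
  have Ek: "E k = 0" unfolding E_def by simp
  have pos: "0 \<le> lam ^ j * lam ^ k * lam * (1 - lam)^2 * real M" for j
    using assms by simp
  have up: "0 \<le> E (k + d)" for d
  proof (induction d)
    case 0 then show ?case using Ek by simp
  next
    case (Suc d)
    have "0 \<le> lam ^ (k+d) * lam ^ k * lam * (1 - lam)^2 * real M * (real (k+d) - real k)"
      using pos[of "k+d"] by simp
    then show ?case using Suc inc[of "k+d"] by simp
  qed
  have down: "d \<le> k \<Longrightarrow> 0 \<le> E (k - d)" for d
  proof (induction d)
    case 0 then show ?case using Ek by simp
  next
    case (Suc d)
    have e: "Suc (k - Suc d) = k - d" using Suc.prems by simp
    have "lam ^ (k - Suc d) * lam ^ k * lam * (1 - lam)^2 * real M * (real (k - Suc d) - real k) \<le> 0"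
      using pos[of "k - Suc d"] Suc.prems by (intro mult_nonneg_nonpos) auto
    then show ?case using Suc inc[of "k - Suc d"] e by simp
  qed
  have "0 \<le> E j"
  proof (cases "k \<le> j")
    case True then show ?thesis using up[of "j - k"] by simp
  next
    case False then show ?thesis using down[of "k - j"] by simp
  qed
  then show ?thesis unfolding E_def by simp
qed


lemma Num_eq:
  fixes \<epsilon> \<delta> lam :: real
  assumes "0 < \<epsilon>" "0 < \<delta>" "0 < lam" "lam < 1" "M = Suc N"
  shows "(PP lam M k - PP lam M (Suc k)) * hh \<epsilon> lam M k
       + (hh \<epsilon> lam M k - hh \<epsilon> lam M (Suc k)) * (real M * lam * \<delta> - PP lam M k)
     = real M * lam ^ (Suc k) * (lam * (1 - lam) * \<delta> * \<epsilon>) * (real N - Ntil \<epsilon> \<delta> lam k)"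
proof -
  have nz: "lam * (1 - lam) * \<delta> * \<epsilon> \<noteq> 0" using assms by simp
  have nt: "(lam * (1 - lam) * \<delta> * \<epsilon>) * Ntil \<epsilon> \<delta> lam k =
     real k * (1 - lam)^2 * \<delta> * (1 - \<epsilon>) + lam ^ (k+1) + lam * \<delta> * (real k * (1 - lam) - 1)"
    unfolding Ntil_def using nz by simp
  have "real M * lam ^ (Suc k) * (lam * (1 - lam) * \<delta> * \<epsilon>) * (real N - Ntil \<epsilon> \<delta> lam k)
     = real M * lam ^ (Suc k) * ((lam * (1 - lam) * \<delta> * \<epsilon>) * real N
        - (real k * (1 - lam)^2 * \<delta> * (1 - \<epsilon>) + lam ^ (k+1) + lam * \<delta> * (real k * (1 - lam) - 1)))"
    unfolding nt[symmetric] by (simp add: algebra_simps)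
  also have "\<dots> = (PP lam M k - PP lam M (Suc k)) * hh \<epsilon> lam M k
       + (hh \<epsilon> lam M k - hh \<epsilon> lam M (Suc k)) * (real M * lam * \<delta> - PP lam M k)"
    unfolding PP_def hh_def qq_def using assms(5) by (simp add: algebra_simps power2_eq_square)
  finally show ?thesis by simp
qed

lemma m_exists:
  assumes "0 < lam" "lam < 1" "0 < X"
  shows "\<exists>j. PP lam M (Suc j) < X"
proof -
  have eq: "(\<lambda>j. PP lam M j) = (\<lambda>j. (real M * lam) * lam ^ j + (1 - lam) * (of_nat j * lam ^ j))"
    unfolding PP_def by (auto simp: algebra_simps)
  have t1: "(\<lambda>j. lam ^ j) \<longlonglongrightarrow> 0" using assms by (intro LIMSEQ_power_zero) auto
  have t2: "(\<lambda>j. of_nat j * lam ^ j) \<longlonglongrightarrow> (0::real)" using assms by (intro powser_times_n_limit_0) auto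
  have "(\<lambda>j. PP lam M j) \<longlonglongrightarrow> (real M * lam) * 0 + (1 - lam) * 0"
    unfolding eq by (intro tendsto_intros t1 t2)
  then have "(\<lambda>j. PP lam M j) \<longlonglongrightarrow> 0" by simp
  then have "eventually (\<lambda>j. PP lam M j < X) sequentially" using assms by (intro order_tendstoD(2)) auto
  then obtain n where "\<And>j. j \<ge> n \<Longrightarrow> PP lam M j < X" unfolding eventually_sequentially by auto
  then show ?thesis by (intro exI[of _ n]) auto
qed

definition NumF :: "real \<Rightarrow> real \<Rightarrow> nat \<Rightarrow> real \<Rightarrow> nat \<Rightarrow> real" where
  "NumF \<epsilon> lam M X k = (PP lam M k - PP lam M (Suc k)) * hh \<epsilon> lam M k
       + (hh \<epsilon> lam M k - hh \<epsilon> lam M (Suc k)) * (X - PP lam M k)"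

lemma two_point_sum:
  fixes f :: "nat \<Rightarrow> real"
  assumes "Suc m \<le> M"
  shows "(\<Sum>j\<le>M. (if j = m then u else if j = Suc m then v else 0) * f j) = u * f m + v * f (Suc m)"
proof -
  have "(\<Sum>j\<le>M. (if j = m then u else if j = Suc m then v else 0) * f j)
      = (\<Sum>j\<le>M. (if j = m then u * f m else 0) + (if j = Suc m then v * f (Suc m) else 0))"
    by (intro sum.cong) auto
  also have "\<dots> = u * f m + v * f (Suc m)" using assms by (simp add: sum.distrib)
  finally show ?thesis .
qed

lemma classical:
  fixes \<epsilon> lam X :: real and M :: nat
  assumes "0 < \<epsilon>" "\<epsilon> < 1" "0 < lam" "lam < 1" "2 \<le> M" "0 < X" "X \<le> real M * lam"
  shows "(\<exists>k. 0 \<le> NumF \<epsilon> lam M X k) \<Longrightarrow> (\<forall>c. (\<forall>j\<le>M. 0 \<le> c j) \<longrightarrow> (\<Sum>j\<le>M. c j) = 1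
            \<longrightarrow> X \<le> (\<Sum>j\<le>M. c j * PP lam M j) \<longrightarrow> 0 \<le> (\<Sum>j\<le>M. c j * hh \<epsilon> lam M j))"
    and "\<not> (\<exists>k. 0 \<le> NumF \<epsilon> lam M X k) \<Longrightarrow> (\<exists>c. (\<forall>j\<le>M. 0 \<le> c j) \<and> (\<Sum>j\<le>M. c j) = 1
            \<and> X \<le> (\<Sum>j\<le>M. c j * PP lam M j) \<and> (\<Sum>j\<le>M. c j * hh \<epsilon> lam M j) < 0)"
proof -
  let ?P = "PP lam M" and ?h = "hh \<epsilon> lam M"
  define m where "m = (LEAST j. ?P (Suc j) < X)"
  have m1: "?P (Suc m) < X" unfolding m_def using m_exists[OF assms(3,4,6)] by (rule LeastI_ex)
  have m2: "j < m \<Longrightarrow> X \<le> ?P (Suc j)" for j unfolding m_def using not_less_Least by force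
  have m3: "X \<le> ?P m"
  proof (cases m)
    case 0 then show ?thesis using assms unfolding PP_def by simp
  next
    case (Suc j) then show ?thesis using m2[of j] by simp
  qed
  have Dpos: "0 < ?P k - ?P (Suc k)" for k using DD_pos assms by simp
  define a where "a = X - ?P (Suc m)"
  define b where "b = ?P m - X"
  have a0: "0 < a" and b0: "0 \<le> b" using m1 m3 unfolding a_def b_def by simp_all
  have ab: "a + b = ?P m - ?P (Suc m)" unfolding a_def b_def by simp
  have Num_m: "NumF \<epsilon> lam M X m = a * ?h m + b * ?h (Suc m)"
    unfolding NumF_def a_def b_def by (simp add: algebra_simps)
  define c0 where "c0 = 1 - \<epsilon> * (1 - lam)"
  have c0p: "0 < c0" unfolding c0_def using assms
    by (smt (verit, best) mult_less_cancel_left2)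
  have hform: "?h j = lam ^ j * (\<epsilon> * real M * lam - real j * c0)" for j
    unfolding hh_eq c0_def by simp
  have neg_next: "?h j < 0 \<Longrightarrow> ?h (Suc j) < 0" for j
  proof -
    assume "?h j < 0"
    then have "\<epsilon> * real M * lam - real j * c0 < 0" unfolding hform using assms
      by (simp add: mult_less_0_iff)
    then have "\<epsilon> * real M * lam - real (Suc j) * c0 < 0" using c0p by (simp add: algebra_simps)
    then show "?h (Suc j) < 0" unfolding hform using assms by (simp add: mult_pos_neg)
  qed
  have dec_next: "0 \<le> ?h j \<Longrightarrow> ?h (Suc j) \<le> ?h j" for j
  proof -
    assume "0 \<le> ?h j"
    moreover have "0 < lam ^ j" using assms by simp
    ultimately have A: "0 \<le> \<epsilon> * real M * lam - real j * c0" unfolding hform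
      by (simp add: zero_le_mult_iff)
    have "?h (Suc j) = lam * (lam ^ j * (\<epsilon> * real M * lam - real j * c0 - c0))"
      unfolding hform by (simp add: algebra_simps)
    also have "\<dots> \<le> lam * (lam ^ j * (\<epsilon> * real M * lam - real j * c0))"
      using assms c0p by (intro mult_left_mono) auto
    also have "\<dots> \<le> lam ^ j * (\<epsilon> * real M * lam - real j * c0)"
      using assms A by (intro mult_left_le_one_le) auto
    finally show "?h (Suc j) \<le> ?h j" unfolding hform .
  qed
  show "\<forall>c. (\<forall>j\<le>M. 0 \<le> c j) \<longrightarrow> (\<Sum>j\<le>M. c j) = 1
            \<longrightarrow> X \<le> (\<Sum>j\<le>M. c j * PP lam M j) \<longrightarrow> 0 \<le> (\<Sum>j\<le>M. c j * hh \<epsilon> lam M j)"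
    if ex: "\<exists>k. 0 \<le> NumF \<epsilon> lam M X k"
  proof -
    obtain k where k: "0 \<le> NumF \<epsilon> lam M X k" using ex by blast
    define Dk where "Dk = ?P k - ?P (Suc k)"
    define g where "g = ?h k - ?h (Suc k)"
    have cv: "Dk * ?h j \<ge> Dk * ?h k + g * (?P j - ?P k)" for j
      unfolding Dk_def g_def by (rule convex_hh[OF assms(3,4)])
    have i1: "a * (Dk * ?h m) \<ge> a * (Dk * ?h k + g * (?P m - ?P k))"
      using cv a0 by (intro mult_left_mono) auto
    have i2: "b * (Dk * ?h (Suc m)) \<ge> b * (Dk * ?h k + g * (?P (Suc m) - ?P k))"
      using cv b0 by (intro mult_left_mono) auto
    have e1: "Dk * NumF \<epsilon> lam M X m = a * (Dk * ?h m) + b * (Dk * ?h (Suc m))"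
      unfolding Num_m by (simp add: algebra_simps)
    have e2: "a * (Dk * ?h k + g * (?P m - ?P k)) + b * (Dk * ?h k + g * (?P (Suc m) - ?P k))
        = (?P m - ?P (Suc m)) * NumF \<epsilon> lam M X k"
      unfolding NumF_def Dk_def g_def a_def b_def by (simp add: algebra_simps)
    have "0 \<le> (?P m - ?P (Suc m)) * NumF \<epsilon> lam M X k" using Dpos[of m] k by simp
    then have "0 \<le> Dk * NumF \<epsilon> lam M X m" using i1 i2 e1 e2 by linarith
    then have Nm: "0 \<le> NumF \<epsilon> lam M X m" using Dpos[of k] unfolding Dk_def
      by (simp add: zero_le_mult_iff)
    have hm: "0 \<le> ?h m"
    proof (rule ccontr)
      assume "\<not> 0 \<le> ?h m"
      then have "?h m < 0" "?h (Suc m) < 0" using neg_next by auto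
      then have "a * ?h m + b * ?h (Suc m) < 0" using a0 b0
        by (smt (verit) mult_pos_neg mult_nonneg_nonpos)
      then show False using Nm Num_m by simp
    qed
    have gm: "0 \<le> ?h m - ?h (Suc m)" using dec_next[OF hm] by simp
    show ?thesis
    proof (intro allI impI)
      fix c :: "nat \<Rightarrow> real"
      assume c0: "\<forall>j\<le>M. 0 \<le> c j" and c1: "(\<Sum>j\<le>M. c j) = 1" and cX: "X \<le> (\<Sum>j\<le>M. c j * ?P j)"
      define Dm where "Dm = ?P m - ?P (Suc m)"
      define gm' where "gm' = ?h m - ?h (Suc m)"
      have cvm: "Dm * ?h j \<ge> Dm * ?h m + gm' * (?P j - ?P m)" for j
        unfolding Dm_def gm'_def by (rule convex_hh[OF assms(3,4)])
      have "(\<Sum>j\<le>M. c j * (Dm * ?h m + gm' * (?P j - ?P m))) \<le> (\<Sum>j\<le>M. c j * (Dm * ?h j))"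
        using c0 cvm by (intro sum_mono mult_left_mono) auto
      moreover have "(\<Sum>j\<le>M. c j * (Dm * ?h m + gm' * (?P j - ?P m)))
          = (Dm * ?h m - gm' * ?P m) * (\<Sum>j\<le>M. c j) + gm' * (\<Sum>j\<le>M. c j * ?P j)"
      proof -
        have "(\<Sum>j\<le>M. c j * (Dm * ?h m + gm' * (?P j - ?P m)))
           = (\<Sum>j\<le>M. (Dm * ?h m - gm' * ?P m) * c j + gm' * (c j * ?P j))"
          by (intro sum.cong) (auto simp: algebra_simps)
        also have "\<dots> = (Dm * ?h m - gm' * ?P m) * (\<Sum>j\<le>M. c j) + gm' * (\<Sum>j\<le>M. c j * ?P j)"
          by (simp add: sum.distrib sum_distrib_left)
        finally show ?thesis .
      qed
      moreover have "(\<Sum>j\<le>M. c j * (Dm * ?h j)) = Dm * (\<Sum>j\<le>M. c j * ?h j)"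
        by (simp add: sum_distrib_left algebra_simps)
      moreover have "gm' * X \<le> gm' * (\<Sum>j\<le>M. c j * ?P j)"
        using cX gm unfolding gm'_def by (intro mult_left_mono) auto
      moreover have "NumF \<epsilon> lam M X m = Dm * ?h m + gm' * (X - ?P m)"
        unfolding NumF_def Dm_def gm'_def by simp
      ultimately have "0 \<le> Dm * (\<Sum>j\<le>M. c j * ?h j)" using Nm c1 by (simp add: algebra_simps)
      then show "0 \<le> (\<Sum>j\<le>M. c j * ?h j)" using Dpos[of m] unfolding Dm_def
        by (simp add: zero_le_mult_iff)
    qed
  qed
  show "\<exists>c. (\<forall>j\<le>M. 0 \<le> c j) \<and> (\<Sum>j\<le>M. c j) = 1
            \<and> X \<le> (\<Sum>j\<le>M. c j * PP lam M j) \<and> (\<Sum>j\<le>M. c j * hh \<epsilon> lam M j) < 0"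
    if nex: "\<not> (\<exists>k. 0 \<le> NumF \<epsilon> lam M X k)"
  proof -
    have Nm: "NumF \<epsilon> lam M X m < 0" using nex not_le by blast
    show ?thesis
    proof (cases "Suc m \<le> M")
      case True
      define Dm where "Dm = ?P m - ?P (Suc m)"
      have Dm0: "0 < Dm" using Dpos unfolding Dm_def by simp
      define c where "c = (\<lambda>j. (if j = m then a / Dm else if j = Suc m then b / Dm else 0) :: real)"
      have s: "(\<Sum>j\<le>M. c j * f j) = a / Dm * f m + b / Dm * f (Suc m)" for f :: "nat \<Rightarrow> real"
        unfolding c_def by (rule two_point_sum[OF True])
      have "(\<Sum>j\<le>M. c j) = (\<Sum>j\<le>M. c j * 1)" by simp
      also have "\<dots> = (a + b) / Dm" unfolding s by (simp add: add_divide_distrib)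
      also have "\<dots> = 1" using ab Dm0 unfolding Dm_def by simp
      finally have c1: "(\<Sum>j\<le>M. c j) = 1" .
      have cP: "(\<Sum>j\<le>M. c j * ?P j) = X"
      proof -
        have "a * ?P m + b * ?P (Suc m) = X * Dm" unfolding a_def b_def Dm_def by (simp add: algebra_simps)
        then have "a / Dm * ?P m + b / Dm * ?P (Suc m) = X * Dm / Dm" by (simp add: add_divide_distrib[symmetric])
        then show ?thesis unfolding s using Dm0 by simp
      qed
      have ch: "(\<Sum>j\<le>M. c j * ?h j) = NumF \<epsilon> lam M X m / Dm"
        unfolding s Num_m using Dm0 by (simp add: field_simps)
      have "(\<Sum>j\<le>M. c j * ?h j) < 0" unfolding ch using Nm Dm0 by (simp add: divide_neg_pos)
      moreover have "\<forall>j\<le>M. 0 \<le> c j" unfolding c_def using a0 b0 Dm0 by auto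
      ultimately show ?thesis using c1 cP by auto
    next
      case False
      define c where "c = (\<lambda>j. (if j = M then 1 else 0) :: real)"
      have s: "(\<Sum>j\<le>M. c j * f j) = f M" for f :: "nat \<Rightarrow> real"
      proof -
        have "(\<Sum>j\<le>M. c j * f j) = (\<Sum>j\<le>M. if j = M then f M else 0)"
          unfolding c_def by (intro sum.cong) auto
        then show ?thesis by simp
      qed
      have "X \<le> ?P M" using m2[of "M - 1"] False assms(5) by simp
      moreover have "?h M < 0"
      proof -
        have "?h M = lam ^ M * (real M * (\<epsilon> - 1))" unfolding hform c0_def by (simp add: algebra_simps)
        moreover have "real M * (\<epsilon> - 1) < 0" using assms by (simp add: mult_pos_neg)
        ultimately show ?thesis using assms by (simp add: mult_pos_neg)
      qed
      moreover have "(\<Sum>j\<le>M. c j) = 1" unfolding c_def by simp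
      moreover have "\<forall>j\<le>M. 0 \<le> c j" unfolding c_def by simp
      ultimately show ?thesis using s[of ?P] s[of ?h] by (intro exI[of _ c]) simp
    qed
  qed
qed


lemma finite_idx: "finite (idx D n)"
proof -
  have "idx D n = {xs. set xs \<subseteq> {..<D} \<and> length xs = n}" unfolding idx_def by auto
  then show ?thesis using finite_lists_length_eq[of "{..<D}" n] by simp
qed

lemma idx_0: "idx D 0 = {[]}" unfolding idx_def by auto

lemma idx_Suc: "idx D (Suc n) = (\<lambda>(xs, a). xs @ [a]) ` (idx D n \<times> {..<D})"
proof (intro set_eqI iffI)
  fix ys assume "ys \<in> idx D (Suc n)"
  then have l: "length ys = Suc n" and s: "set ys \<subseteq> {..<D}" unfolding idx_def by auto
  then obtain xs a where "ys = xs @ [a]" by (metis append_butlast_last_id length_0_conv nat.distinct(1))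
  then show "ys \<in> (\<lambda>(xs, a). xs @ [a]) ` (idx D n \<times> {..<D})"
    using l s unfolding idx_def by (auto intro!: image_eqI[of _ _ "(xs, a)"])
next
  fix ys assume "ys \<in> (\<lambda>(xs, a). xs @ [a]) ` (idx D n \<times> {..<D})"
  then show "ys \<in> idx D (Suc n)" unfolding idx_def by auto
qed

lemma inj_snoc: "inj_on (\<lambda>(xs, a). xs @ [a]) X"
  by (auto intro!: inj_onI)

lemma sum_prod_idx:
  fixes F :: "nat \<Rightarrow> nat \<Rightarrow> 'b::comm_semiring_1"
  shows "(\<Sum>xs\<in>idx D n. \<Prod>i<n. F i (xs ! i)) = (\<Prod>i<n. \<Sum>a<D. F i a)"
proof (induction n)
  case 0 then show ?case by (simp add: idx_0)
next
  case (Suc n)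
  have "(\<Sum>xs\<in>idx D (Suc n). \<Prod>i<Suc n. F i (xs ! i))
      = (\<Sum>p\<in>idx D n \<times> {..<D}. \<Prod>i<Suc n. F i ((fst p @ [snd p]) ! i))"
    unfolding idx_Suc by (subst sum.reindex[OF inj_snoc]) (simp add: case_prod_beta)
  also have "\<dots> = (\<Sum>p\<in>idx D n \<times> {..<D}. (\<Prod>i<n. F i (fst p ! i)) * F n (snd p))"
  proof (intro sum.cong refl)
    fix p assume p: "p \<in> idx D n \<times> {..<D}"
    then have l: "length (fst p) = n" unfolding idx_def by auto
    have "(\<Prod>i<Suc n. F i ((fst p @ [snd p]) ! i)) = (\<Prod>i<n. F i ((fst p @ [snd p]) ! i)) * F n (snd p)"
      using l by (simp add: nth_append)
    also have "(\<Prod>i<n. F i ((fst p @ [snd p]) ! i)) = (\<Prod>i<n. F i (fst p ! i))"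
      using l by (intro prod.cong) (auto simp: nth_append)
    finally show "(\<Prod>i<Suc n. F i ((fst p @ [snd p]) ! i)) = (\<Prod>i<n. F i (fst p ! i)) * F n (snd p)" .
  qed
  also have "\<dots> = (\<Sum>xs\<in>idx D n. \<Sum>a<D. (\<Prod>i<n. F i (xs ! i)) * F n a)"
    by (simp add: sum.cartesian_product case_prod_beta)
  also have "\<dots> = (\<Sum>xs\<in>idx D n. \<Prod>i<n. F i (xs ! i)) * (\<Sum>a<D. F n a)"
    by (simp add: sum_product)
  also have "\<dots> = (\<Prod>i<Suc n. \<Sum>a<D. F i a)" using Suc by simp
  finally show ?case .
qed

lemma sum2_prod_idx:
  fixes G :: "nat \<Rightarrow> nat \<Rightarrow> nat \<Rightarrow> 'b::comm_semiring_1"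
  shows "(\<Sum>xs\<in>idx D n. \<Sum>ys\<in>idx D n. \<Prod>i<n. G i (xs ! i) (ys ! i)) = (\<Prod>i<n. \<Sum>a<D. \<Sum>b<D. G i a b)"
proof -
  have "(\<Sum>xs\<in>idx D n. \<Sum>ys\<in>idx D n. \<Prod>i<n. G i (xs ! i) (ys ! i))
      = (\<Sum>xs\<in>idx D n. \<Prod>i<n. \<Sum>b<D. G i (xs ! i) b)"
    by (intro sum.cong refl) (rule sum_prod_idx)
  also have "\<dots> = (\<Prod>i<n. \<Sum>a<D. \<Sum>b<D. G i a b)"
    by (rule sum_prod_idx)
  finally show ?thesis .
qed


definition Qop :: "(nat \<Rightarrow> complex) \<Rightarrow> nat \<Rightarrow> nat \<Rightarrow> complex" where
  "Qop \<Psi> i j = (if i = j then 1 else 0) - proj \<Psi> i j"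

definition Aop :: "(nat \<Rightarrow> complex) \<Rightarrow> bool \<Rightarrow> nat \<Rightarrow> nat \<Rightarrow> complex" where
  "Aop \<Psi> b = (if b then Qop \<Psi> else proj \<Psi>)"

definition PiS :: "(nat \<Rightarrow> complex) \<Rightarrow> nat \<Rightarrow> nat set \<Rightarrow> nat list \<Rightarrow> nat list \<Rightarrow> complex" where
  "PiS \<Psi> M S x y = (\<Prod>i<M. Aop \<Psi> (i \<in> S) (x ! i) (y ! i))"

definition wS :: "nat \<Rightarrow> (nat \<Rightarrow> complex) \<Rightarrow> nat \<Rightarrow> (nat list \<Rightarrow> nat list \<Rightarrow> complex) \<Rightarrow> nat set \<Rightarrow> real" where
  "wS D \<Psi> M \<rho> S = Re (trAB D M (PiS \<Psi> M S) \<rho>)"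

lemma prod_perm_reindex:
  assumes "\<sigma> permutes {..<M}"
  shows "(\<Prod>k<M. G (k \<in> S) (\<sigma> k)) = (\<Prod>j<M. G (j \<in> \<sigma> ` S) j)"
proof -
  have b: "bij_betw \<sigma> {..<M} {..<M}" using assms by (rule permutes_imp_bij)
  have i: "inj \<sigma>" using assms by (rule permutes_inj)
  have "(\<Prod>j<M. G (j \<in> \<sigma> ` S) j) = (\<Prod>k<M. G (\<sigma> k \<in> \<sigma> ` S) (\<sigma> k))"
    using prod.reindex_bij_betw[OF b, of "\<lambda>j. G (j \<in> \<sigma> ` S) j"] by simp
  also have "\<dots> = (\<Prod>k<M. G (k \<in> S) (\<sigma> k))"
    using i by (simp add: inj_image_mem_iff)
  finally show ?thesis by simp
qed

lemma perm_idx_nth: "k < n \<Longrightarrow> perm_idx n \<sigma> x ! k = x ! \<sigma> k"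
  unfolding perm_idx_def by simp

lemma perm_idx_in:
  assumes "\<sigma> permutes {..<n}" "x \<in> idx D n"
  shows "perm_idx n \<sigma> x \<in> idx D n"
proof -
  have "\<forall>k<n. x ! \<sigma> k < D"
  proof (intro allI impI)
    fix k assume "k < n"
    then have "\<sigma> k \<in> {..<n}" using permutes_in_image[OF assms(1)] by simp
    then have "\<sigma> k < n" by simp
    then show "x ! \<sigma> k < D" using assms(2) unfolding idx_def by (auto simp: subset_iff in_set_conv_nth)
  qed
  then show ?thesis unfolding idx_def perm_idx_def by (auto simp: in_set_conv_nth)
qed

lemma perm_idx_bij:
  assumes "\<sigma> permutes {..<n}"
  shows "bij_betw (perm_idx n \<sigma>) (idx D n) (idx D n)"
proof -
  have inj: "inj_on (perm_idx n \<sigma>) (idx D n)"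
  proof (rule inj_onI)
    fix x y assume x: "x \<in> idx D n" and y: "y \<in> idx D n" and e: "perm_idx n \<sigma> x = perm_idx n \<sigma> y"
    have "x ! j = y ! j" if "j < n" for j
    proof -
      have "j \<in> \<sigma> ` {..<n}" using permutes_image[OF assms] that by simp
      then obtain k where k: "k < n" "\<sigma> k = j" by auto
      have "perm_idx n \<sigma> x ! k = perm_idx n \<sigma> y ! k" using e by simp
      then show ?thesis using k by (simp add: perm_idx_nth)
    qed
    then show "x = y" using x y unfolding idx_def by (auto intro: nth_equalityI)
  qed
  have sub: "perm_idx n \<sigma> ` idx D n \<subseteq> idx D n" using perm_idx_in[OF assms] by auto
  have "perm_idx n \<sigma> ` idx D n = idx D n" by (rule endo_inj_surj[OF finite_idx sub inj])
  then show ?thesis using inj unfolding bij_betw_def by simp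
qed

lemma PiS_perm:
  assumes "\<sigma> permutes {..<M}" "x \<in> idx D M" "y \<in> idx D M"
  shows "PiS \<Psi> M S (perm_idx M \<sigma> x) (perm_idx M \<sigma> y) = PiS \<Psi> M (\<sigma> ` S) x y"
proof -
  have "PiS \<Psi> M S (perm_idx M \<sigma> x) (perm_idx M \<sigma> y) = (\<Prod>k<M. Aop \<Psi> (k \<in> S) (x ! \<sigma> k) (y ! \<sigma> k))"
    unfolding PiS_def by (intro prod.cong) (auto simp: perm_idx_nth)
  also have "\<dots> = (\<Prod>j<M. Aop \<Psi> (j \<in> \<sigma> ` S) (x ! j) (y ! j))"
    using prod_perm_reindex[OF assms(1), of "\<lambda>b j. Aop \<Psi> b (x ! j) (y ! j)"] by simp
  finally show ?thesis unfolding PiS_def .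
qed

lemma trace_perm:
  assumes "\<sigma> permutes {..<M}" "perm_inv D M \<rho>"
  shows "trAB D M (PiS \<Psi> M (\<sigma> ` S)) \<rho> = trAB D M (PiS \<Psi> M S) \<rho>"
proof -
  have b: "bij_betw (perm_idx M \<sigma>) (idx D M) (idx D M)" by (rule perm_idx_bij[OF assms(1)])
  have "trAB D M (PiS \<Psi> M (\<sigma> ` S)) \<rho> = (\<Sum>x\<in>idx D M. \<Sum>y\<in>idx D M. PiS \<Psi> M (\<sigma> ` S) x y * \<rho> y x)"
    unfolding trAB_def ..
  also have "\<dots> = (\<Sum>x\<in>idx D M. \<Sum>y\<in>idx D M.
       PiS \<Psi> M S (perm_idx M \<sigma> x) (perm_idx M \<sigma> y) * \<rho> (perm_idx M \<sigma> y) (perm_idx M \<sigma> x))"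
    using assms unfolding perm_inv_def by (intro sum.cong refl) (simp add: PiS_perm)
  also have "\<dots> = (\<Sum>x\<in>idx D M. \<Sum>y\<in>idx D M. PiS \<Psi> M S (perm_idx M \<sigma> x) y * \<rho> y (perm_idx M \<sigma> x))"
  proof (rule sum.cong[OF refl])
    fix x assume "x \<in> idx D M"
    show "(\<Sum>y\<in>idx D M. PiS \<Psi> M S (perm_idx M \<sigma> x) (perm_idx M \<sigma> y) * \<rho> (perm_idx M \<sigma> y) (perm_idx M \<sigma> x))
        = (\<Sum>y\<in>idx D M. PiS \<Psi> M S (perm_idx M \<sigma> x) y * \<rho> y (perm_idx M \<sigma> x))"
      by (rule sum.reindex_bij_betw[OF b, of "\<lambda>y. PiS \<Psi> M S (perm_idx M \<sigma> x) y * \<rho> y (perm_idx M \<sigma> x)"])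
  qed
  also have "\<dots> = (\<Sum>x\<in>idx D M. \<Sum>y\<in>idx D M. PiS \<Psi> M S x y * \<rho> y x)"
    by (rule sum.reindex_bij_betw[OF b, of "\<lambda>x. \<Sum>y\<in>idx D M. PiS \<Psi> M S x y * \<rho> y x"])
  finally show ?thesis unfolding trAB_def .
qed


lemma Aop_if: "Aop \<Psi> b a a' = (if b then Qop \<Psi> a a' else proj \<Psi> a a')"
  unfolding Aop_def by simp

lemma prod_expand:
  fixes \<alpha> :: "nat \<Rightarrow> complex"
  shows "(\<Prod>i<M. proj \<Psi> (x!i) (y!i) + \<alpha> i * Qop \<Psi> (x!i) (y!i))
       = (\<Sum>S\<in>Pow {..<M}. (\<Prod>i\<in>S. \<alpha> i) * PiS \<Psi> M S x y)"
proof -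
  have "(\<Prod>i<M. proj \<Psi> (x!i) (y!i) + \<alpha> i * Qop \<Psi> (x!i) (y!i))
      = (\<Prod>i<M. \<alpha> i * Qop \<Psi> (x!i) (y!i) + proj \<Psi> (x!i) (y!i))" by (simp add: add.commute)
  also have "\<dots> = (\<Sum>S\<in>Pow {..<M}. (\<Prod>i\<in>S. \<alpha> i * Qop \<Psi> (x!i) (y!i)) * (\<Prod>i\<in>{..<M}-S. proj \<Psi> (x!i) (y!i)))"
    by (rule prod_add) simp
  also have "\<dots> = (\<Sum>S\<in>Pow {..<M}. (\<Prod>i\<in>S. \<alpha> i) * PiS \<Psi> M S x y)"
  proof (rule sum.cong[OF refl])
    fix S assume S: "S \<in> Pow {..<M}"
    have "PiS \<Psi> M S x y = (\<Prod>i<M. if i \<in> S then Qop \<Psi> (x!i) (y!i) else proj \<Psi> (x!i) (y!i))"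
      unfolding PiS_def Aop_if ..
    also have "\<dots> = (\<Prod>i\<in>{..<M} \<inter> {i. i \<in> S}. Qop \<Psi> (x!i) (y!i)) * (\<Prod>i\<in>{..<M} \<inter> - {i. i \<in> S}. proj \<Psi> (x!i) (y!i))"
      by (rule prod.If_cases) simp
    also have "{..<M} \<inter> {i. i \<in> S} = S" using S by auto
    also have "{..<M} \<inter> - {i. i \<in> S} = {..<M} - S" by auto
    finally have "PiS \<Psi> M S x y = (\<Prod>i\<in>S. Qop \<Psi> (x!i) (y!i)) * (\<Prod>i\<in>{..<M} - S. proj \<Psi> (x!i) (y!i))" .
    then show "(\<Prod>i\<in>S. \<alpha> i * Qop \<Psi> (x!i) (y!i)) * (\<Prod>i\<in>{..<M}-S. proj \<Psi> (x!i) (y!i))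
        = (\<Prod>i\<in>S. \<alpha> i) * PiS \<Psi> M S x y"
      by (simp add: prod.distrib mult.assoc)
  qed
  finally show ?thesis .
qed

lemma trAB_sum:
  "trAB D M (\<lambda>x y. \<Sum>S\<in>A. f S x y) \<rho> = (\<Sum>S\<in>A. trAB D M (f S) \<rho>)"
  unfolding trAB_def by (simp add: sum_distrib_right sum.swap[of _ A])

lemma trAB_scale:
  "trAB D M (\<lambda>x y. c * f x y) \<rho> = c * trAB D M f \<rho>"
  unfolding trAB_def by (simp add: sum_distrib_left mult.assoc)

lemma trAB_cong:
  assumes "\<And>x y. x \<in> idx D M \<Longrightarrow> y \<in> idx D M \<Longrightarrow> f x y = g x y"
  shows "trAB D M f \<rho> = trAB D M g \<rho>"
  unfolding trAB_def using assms by (intro sum.cong refl) auto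

lemma PiS_sum_id:
  assumes "x \<in> idx D M" "y \<in> idx D M"
  shows "(\<Sum>S\<in>Pow {..<M}. PiS \<Psi> M S x y) = (if x = y then 1 else 0)"
proof -
  have "(\<Sum>S\<in>Pow {..<M}. PiS \<Psi> M S x y) = (\<Sum>S\<in>Pow {..<M}. (\<Prod>i\<in>S. (1::complex)) * PiS \<Psi> M S x y)"
    by simp
  also have "\<dots> = (\<Prod>i<M. proj \<Psi> (x!i) (y!i) + 1 * Qop \<Psi> (x!i) (y!i))"
    by (rule prod_expand[symmetric])
  also have "\<dots> = (\<Prod>i<M. if x!i = y!i then 1 else 0)"
    unfolding Qop_def by simp
  also have "\<dots> = (if x = y then 1 else 0)"
  proof (cases "x = y")
    case True then show ?thesis by simp
  next
    case False
    have l: "length x = M" "length y = M" using assms unfolding idx_def by auto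
    then obtain i where "i < M" "x ! i \<noteq> y ! i" using False nth_equalityI by metis
    then show ?thesis using False by (auto intro!: bexI[of _ i])
  qed
  finally show ?thesis .
qed

lemma sum_wS:
  assumes "density_op D M \<rho>"
  shows "(\<Sum>S\<in>Pow {..<M}. wS D \<Psi> M \<rho> S) = 1"
proof -
  have "(\<Sum>S\<in>Pow {..<M}. trAB D M (PiS \<Psi> M S) \<rho>) = trAB D M (\<lambda>x y. \<Sum>S\<in>Pow {..<M}. PiS \<Psi> M S x y) \<rho>"
    by (rule trAB_sum[symmetric])
  also have "\<dots> = trAB D M (\<lambda>x y. if x = y then 1 else 0) \<rho>"
    by (rule trAB_cong) (rule PiS_sum_id)
  also have "\<dots> = (\<Sum>x\<in>idx D M. \<rho> x x)"
  proof -
    have "\<And>x. x \<in> idx D M \<Longrightarrow> (\<Sum>y\<in>idx D M. (if x = y then 1 else 0) * \<rho> y x) = \<rho> x x"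
    proof -
      fix x assume "x \<in> idx D M"
      have "(\<Sum>y\<in>idx D M. (if x = y then 1 else 0) * \<rho> y x) = (\<Sum>y\<in>idx D M. if x = y then \<rho> y x else 0)"
        by (intro sum.cong) auto
      also have "\<dots> = \<rho> x x" using \<open>x \<in> idx D M\<close> finite_idx by simp
      finally show "(\<Sum>y\<in>idx D M. (if x = y then 1 else 0) * \<rho> y x) = \<rho> x x" .
    qed
    then show ?thesis unfolding trAB_def by (intro sum.cong) auto
  qed
  also have "\<dots> = 1" using assms unfolding density_op_def by simp
  finally show ?thesis unfolding wS_def by (metis Re_sum one_complex.simps(1))
qed


lemma norm_sum_c:
  assumes "(\<Sum>i<D. (cmod (\<Psi> i))\<^sup>2) = 1"
  shows "(\<Sum>r<D. cnj (\<Psi> r) * \<Psi> r) = 1"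
proof -
  have "(\<Sum>r<D. cnj (\<Psi> r) * \<Psi> r) = (\<Sum>r<D. complex_of_real ((cmod (\<Psi> r))\<^sup>2))"
    by (intro sum.cong refl) (metis complex_norm_square mult.commute)
  also have "\<dots> = complex_of_real (\<Sum>r<D. (cmod (\<Psi> r))\<^sup>2)" by simp
  finally show ?thesis using assms by simp
qed

definition uvec :: "(nat \<Rightarrow> complex) \<Rightarrow> bool \<Rightarrow> nat \<Rightarrow> nat \<Rightarrow> complex" where
  "uvec \<Psi> b r a = (if b then (if a = r then 1 else 0) - \<Psi> a * cnj (\<Psi> r) else (if r = 0 then \<Psi> a else 0))"

lemma Aop_rank:
  assumes "0 < D" "(\<Sum>i<D. (cmod (\<Psi> i))\<^sup>2) = 1" "a < D" "a' < D"
  shows "Aop \<Psi> b a a' = (\<Sum>r<D. uvec \<Psi> b r a * cnj (uvec \<Psi> b r a'))"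
proof (cases b)
  case False
  have "(\<Sum>r<D. uvec \<Psi> b r a * cnj (uvec \<Psi> b r a')) = (\<Sum>r<D. if r = 0 then \<Psi> a * cnj (\<Psi> a') else 0)"
    unfolding uvec_def using False by (intro sum.cong) auto
  also have "\<dots> = \<Psi> a * cnj (\<Psi> a')" using assms(1) by simp
  finally show ?thesis using False unfolding Aop_def proj_def by simp
next
  case True
  have "(\<Sum>r<D. uvec \<Psi> b r a * cnj (uvec \<Psi> b r a'))
      = (\<Sum>r<D. (if r = a then (if a = a' then 1 else 0) else 0)
            - (if r = a then cnj (\<Psi> a') * \<Psi> a else 0)
            - (if r = a' then \<Psi> a * cnj (\<Psi> a') else 0)
            + \<Psi> a * cnj (\<Psi> a') * (cnj (\<Psi> r) * \<Psi> r))"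
    unfolding uvec_def using True by (intro sum.cong) (auto simp: algebra_simps)
  also have "\<dots> = (if a = a' then 1 else 0) - cnj (\<Psi> a') * \<Psi> a - \<Psi> a * cnj (\<Psi> a')
       + \<Psi> a * cnj (\<Psi> a') * (\<Sum>r<D. cnj (\<Psi> r) * \<Psi> r)"
    using assms by (simp add: sum.distrib sum_subtractf sum_distrib_left)
  also have "\<dots> = Qop \<Psi> a a'" unfolding norm_sum_c[OF assms(2)] Qop_def proj_def by simp
  finally show ?thesis using True unfolding Aop_def by simp
qed

definition Vv :: "(nat \<Rightarrow> complex) \<Rightarrow> nat \<Rightarrow> nat set \<Rightarrow> nat list \<Rightarrow> nat list \<Rightarrow> complex" where
  "Vv \<Psi> M S rs x = (\<Prod>i<M. uvec \<Psi> (i \<in> S) (rs ! i) (x ! i))"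

lemma PiS_rank:
  assumes "0 < D" "(\<Sum>i<D. (cmod (\<Psi> i))\<^sup>2) = 1" "x \<in> idx D M" "y \<in> idx D M"
  shows "PiS \<Psi> M S x y = (\<Sum>rs\<in>idx D M. Vv \<Psi> M S rs x * cnj (Vv \<Psi> M S rs y))"
proof -
  have xi: "\<And>i. i < M \<Longrightarrow> x ! i < D"
    using assms(3) unfolding idx_def by (auto simp: subset_iff in_set_conv_nth)
  have yi: "\<And>i. i < M \<Longrightarrow> y ! i < D"
    using assms(4) unfolding idx_def by (auto simp: subset_iff in_set_conv_nth)
  have "PiS \<Psi> M S x y = (\<Prod>i<M. \<Sum>r<D. uvec \<Psi> (i \<in> S) r (x ! i) * cnj (uvec \<Psi> (i \<in> S) r (y ! i)))"
    unfolding PiS_def using Aop_rank[OF assms(1,2)] xi yi by (intro prod.cong) auto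
  also have "\<dots> = (\<Sum>rs\<in>idx D M. \<Prod>i<M. uvec \<Psi> (i \<in> S) (rs ! i) (x ! i) * cnj (uvec \<Psi> (i \<in> S) (rs ! i) (y ! i)))"
    by (rule sum_prod_idx[symmetric])
  also have "\<dots> = (\<Sum>rs\<in>idx D M. Vv \<Psi> M S rs x * cnj (Vv \<Psi> M S rs y))"
    unfolding Vv_def by (simp add: prod.distrib)
  finally show ?thesis .
qed

definition quad :: "nat \<Rightarrow> nat \<Rightarrow> (nat list \<Rightarrow> nat list \<Rightarrow> complex) \<Rightarrow> (nat list \<Rightarrow> complex) \<Rightarrow> complex" where
  "quad D M \<rho> v = (\<Sum>x\<in>idx D M. \<Sum>y\<in>idx D M. cnj (v x) * \<rho> x y * v y)"

lemma trAB_rank1: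
  "trAB D M (\<lambda>x y. v x * cnj (v y)) \<rho> = quad D M \<rho> v"
proof -
  have "trAB D M (\<lambda>x y. v x * cnj (v y)) \<rho> = (\<Sum>x\<in>idx D M. \<Sum>y\<in>idx D M. cnj (v y) * \<rho> y x * v x)"
    unfolding trAB_def by (simp add: algebra_simps)
  also have "\<dots> = quad D M \<rho> v" unfolding quad_def by (rule sum.swap)
  finally show ?thesis .
qed

lemma wS_nonneg:
  assumes "0 < D" "(\<Sum>i<D. (cmod (\<Psi> i))\<^sup>2) = 1" "density_op D M \<rho>"
  shows "0 \<le> wS D \<Psi> M \<rho> S"
proof -
  have "trAB D M (PiS \<Psi> M S) \<rho> = trAB D M (\<lambda>x y. \<Sum>rs\<in>idx D M. Vv \<Psi> M S rs x * cnj (Vv \<Psi> M S rs y)) \<rho>"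
    by (rule trAB_cong) (rule PiS_rank[OF assms(1,2)])
  also have "\<dots> = (\<Sum>rs\<in>idx D M. quad D M \<rho> (Vv \<Psi> M S rs))"
    by (simp add: trAB_sum trAB_rank1)
  finally have e: "wS D \<Psi> M \<rho> S = (\<Sum>rs\<in>idx D M. Re (quad D M \<rho> (Vv \<Psi> M S rs)))"
    unfolding wS_def by simp
  have "0 \<le> Re (quad D M \<rho> v)" for v using assms(3) unfolding density_op_def quad_def by blast
  then show ?thesis unfolding e by (intro sum_nonneg) auto
qed


lemma test_expand:
  assumes "\<And>a b. B a b = proj \<Psi> a b + complex_of_real \<beta> * Qop \<Psi> a b"
  shows "test_op \<Psi> lam N B x y = (\<Sum>S\<in>Pow {..<Suc N}.
            complex_of_real (\<Prod>i\<in>S. if i < N then lam else \<beta>) * PiS \<Psi> (Suc N) S x y)"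
proof -
  have "test_op \<Psi> lam N B x y = (\<Prod>i<Suc N. proj \<Psi> (x!i) (y!i)
      + complex_of_real (if i < N then lam else \<beta>) * Qop \<Psi> (x!i) (y!i))"
  proof -
    have "(\<Prod>i<N. Omega \<Psi> lam (x ! i) (y ! i)) = (\<Prod>i<N. proj \<Psi> (x!i) (y!i)
      + complex_of_real (if i < N then lam else \<beta>) * Qop \<Psi> (x!i) (y!i))"
      unfolding Omega_def Qop_def by (intro prod.cong) auto
    then show ?thesis unfolding test_op_def using assms by simp
  qed
  also have "\<dots> = (\<Sum>S\<in>Pow {..<Suc N}. (\<Prod>i\<in>S. complex_of_real (if i < N then lam else \<beta>)) * PiS \<Psi> (Suc N) S x y)"
    by (rule prod_expand)
  finally show ?thesis by simp
qed

lemma Re_trAB_expand: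
  assumes "\<And>a b. B a b = proj \<Psi> a b + complex_of_real \<beta> * Qop \<Psi> a b"
  shows "Re (trAB D (Suc N) (test_op \<Psi> lam N B) \<rho>)
       = (\<Sum>S\<in>Pow {..<Suc N}. (\<Prod>i\<in>S. if i < N then lam else \<beta>) * wS D \<Psi> (Suc N) \<rho> S)"
proof -
  have "trAB D (Suc N) (test_op \<Psi> lam N B) \<rho>
      = trAB D (Suc N) (\<lambda>x y. \<Sum>S\<in>Pow {..<Suc N}.
            complex_of_real (\<Prod>i\<in>S. if i < N then lam else \<beta>) * PiS \<Psi> (Suc N) S x y) \<rho>"
  proof -
    have "test_op \<Psi> lam N B = (\<lambda>x y. \<Sum>S\<in>Pow {..<Suc N}.
            complex_of_real (\<Prod>i\<in>S. if i < N then lam else \<beta>) * PiS \<Psi> (Suc N) S x y)"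
      by (intro ext) (rule test_expand[OF assms])
    then show ?thesis by simp
  qed
  also have "\<dots> = (\<Sum>S\<in>Pow {..<Suc N}. complex_of_real (\<Prod>i\<in>S. if i < N then lam else \<beta>) * trAB D (Suc N) (PiS \<Psi> (Suc N) S) \<rho>)"
    by (simp only: trAB_sum trAB_scale)
  finally show ?thesis unfolding wS_def by (simp add: Re_sum del: of_real_prod)
qed

lemma p_expand:
  "p_rho D \<Psi> lam N \<rho> = (\<Sum>S\<in>Pow {..<Suc N}. (\<Prod>i\<in>S. if i < N then lam else 1) * wS D \<Psi> (Suc N) \<rho> S)"
  unfolding p_rho_def Suc_eq_plus1[symmetric] by (rule Re_trAB_expand[where \<beta> = 1]) (simp add: Qop_def)

lemma f_expand:
  "f_rho D \<Psi> lam N \<rho> = (\<Sum>S\<in>Pow {..<Suc N}. (\<Prod>i\<in>S. if i < N then lam else 0) * wS D \<Psi> (Suc N) \<rho> S)"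
  unfolding f_rho_def Suc_eq_plus1[symmetric] by (rule Re_trAB_expand[where \<beta> = 0]) simp

lemma coef_p:
  fixes lam :: real
  assumes "S \<subseteq> {..<Suc N}"
  shows "lam * (\<Prod>i\<in>S. if i < N then lam else 1) = (if N \<in> S then lam ^ card S else lam ^ Suc (card S))"
proof (cases "N \<in> S")
  case False
  then have "(\<Prod>i\<in>S. if i < N then lam else 1) = (\<Prod>i\<in>S. lam)"
    using assms by (intro prod.cong) (auto simp: less_Suc_eq)
  then show ?thesis using False by simp
next
  case True
  have fin: "finite S" using assms finite_subset by blast
  have S: "S = insert N (S - {N})" using True by auto
  have "(\<Prod>i\<in>S. if i < N then lam else 1) = (\<Prod>i\<in>insert N (S - {N}). if i < N then lam else 1)"
    using S by simp
  also have "\<dots> = (\<Prod>i\<in>S - {N}. if i < N then lam else 1)" using fin by (subst prod.insert) auto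
  also have "\<dots> = (\<Prod>i\<in>S - {N}. lam)"
    using assms by (intro prod.cong) (auto simp: less_Suc_eq)
  also have "\<dots> = lam ^ (card S - 1)" using fin True by simp
  finally have "lam * (\<Prod>i\<in>S. if i < N then lam else 1) = lam * lam ^ (card S - 1)" by simp
  also have "\<dots> = lam ^ card S"
  proof -
    have "card S \<noteq> 0" using fin True by auto
    then obtain k where "card S = Suc k" using not0_implies_Suc by blast
    then show ?thesis by simp
  qed
  finally show ?thesis using True by simp
qed

lemma coef_f:
  fixes lam :: real
  assumes "S \<subseteq> {..<Suc N}"
  shows "(\<Prod>i\<in>S. if i < N then lam else 0) = (if N \<in> S then 0 else lam ^ card S)"
proof (cases "N \<in> S")
  case False
  then have "(\<Prod>i\<in>S. if i < N then lam else 0) = (\<Prod>i\<in>S. lam)"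
    using assms by (intro prod.cong) (auto simp: less_Suc_eq)
  then show ?thesis using False by simp
next
  case True
  have fin: "finite S" using assms finite_subset by blast
  have "(\<Prod>i\<in>S. if i < N then lam else 0) = 0"
    using fin True by (subst prod_zero_iff) (auto intro!: bexI[of _ N])
  then show ?thesis using True by simp
qed


definition Aset :: "nat \<Rightarrow> nat \<Rightarrow> nat set set" where
  "Aset M j = {S. S \<subseteq> {..<M} \<and> card S = j}"

definition ccF :: "nat \<Rightarrow> (nat \<Rightarrow> complex) \<Rightarrow> nat \<Rightarrow> (nat list \<Rightarrow> nat list \<Rightarrow> complex) \<Rightarrow> nat \<Rightarrow> real" where
  "ccF D \<Psi> M \<rho> j = (\<Sum>S\<in>Aset M j. wS D \<Psi> M \<rho> S)"

definition ddF :: "nat \<Rightarrow> (nat \<Rightarrow> complex) \<Rightarrow> nat \<Rightarrow> (nat list \<Rightarrow> nat list \<Rightarrow> complex) \<Rightarrow> nat \<Rightarrow> nat \<Rightarrow> real" where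
  "ddF D \<Psi> M \<rho> i j = (\<Sum>S\<in>Aset M j. if i \<in> S then wS D \<Psi> M \<rho> S else 0)"

lemma finite_Aset: "finite (Aset M j)"
  unfolding Aset_def by (rule finite_subset[of _ "Pow {..<M}"]) auto

lemma group_Pow:
  fixes g :: "nat set \<Rightarrow> real"
  shows "(\<Sum>S\<in>Pow {..<M}. g S) = (\<Sum>j\<le>M. \<Sum>S\<in>Aset M j. g S)"
proof -
  have sub: "card ` Pow {..<M} \<subseteq> {..M}"
  proof
    fix k assume "k \<in> card ` Pow {..<M}"
    then obtain S where "S \<subseteq> {..<M}" "k = card S" by auto
    then have "k \<le> card {..<M}" using card_mono[OF finite_lessThan] by simp
    then show "k \<in> {..M}" by simp
  qed
  have "(\<Sum>j\<le>M. \<Sum>S\<in>{x \<in> Pow {..<M}. card x = j}. g S) = (\<Sum>S\<in>Pow {..<M}. g S)"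
    by (rule sum.group[OF _ _ sub]) auto
  moreover have "{x \<in> Pow {..<M}. card x = j} = Aset M j" for j unfolding Aset_def by auto
  ultimately show ?thesis by simp
qed

lemma sum_if_split:
  fixes a b :: "nat \<Rightarrow> real"
  shows "(\<Sum>S\<in>Pow {..<M}. (if N \<in> S then a (card S) else b (card S)) * wS D \<Psi> M \<rho> S)
     = (\<Sum>j\<le>M. b j * ccF D \<Psi> M \<rho> j + (a j - b j) * ddF D \<Psi> M \<rho> N j)"
proof -
  have "(\<Sum>S\<in>Pow {..<M}. (if N \<in> S then a (card S) else b (card S)) * wS D \<Psi> M \<rho> S)
      = (\<Sum>j\<le>M. \<Sum>S\<in>Aset M j. (if N \<in> S then a (card S) else b (card S)) * wS D \<Psi> M \<rho> S)"
    by (rule group_Pow)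
  also have "\<dots> = (\<Sum>j\<le>M. \<Sum>S\<in>Aset M j. b j * wS D \<Psi> M \<rho> S + (a j - b j) * (if N \<in> S then wS D \<Psi> M \<rho> S else 0))"
    by (intro sum.cong refl) (auto simp: Aset_def algebra_simps)
  also have "\<dots> = (\<Sum>j\<le>M. b j * ccF D \<Psi> M \<rho> j + (a j - b j) * ddF D \<Psi> M \<rho> N j)"
    unfolding ccF_def ddF_def by (simp add: sum.distrib sum_distrib_left)
  finally show ?thesis .
qed

lemma ddF_sym:
  assumes "perm_inv D M \<rho>" "i < M" "N < M"
  shows "ddF D \<Psi> M \<rho> i j = ddF D \<Psi> M \<rho> N j"
proof -
  define \<tau> where "\<tau> = Transposition.transpose i N"
  have perm: "\<tau> permutes {..<M}" unfolding \<tau>_def using assms by (intro permutes_swap_id) auto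
  have inv: "\<tau> (\<tau> x) = x" for x unfolding \<tau>_def by simp
  have img: "\<tau> ` (\<tau> ` S) = S" for S by (simp add: image_image inv)
  have inA: "\<tau> ` S \<in> Aset M j" if "S \<in> Aset M j" for S
  proof -
    have "\<tau> ` S \<subseteq> {..<M}" using that permutes_image[OF perm] unfolding Aset_def by auto
    moreover have "card (\<tau> ` S) = card S" using permutes_inj[OF perm] by (simp add: card_image inj_on_subset)
    ultimately show ?thesis using that unfolding Aset_def by simp
  qed
  have bij: "bij_betw ((`) \<tau>) (Aset M j) (Aset M j)"
    by (rule bij_betw_byWitness[where f' = "(`) \<tau>"]) (use img inA in auto)
  have w: "wS D \<Psi> M \<rho> (\<tau> ` S) = wS D \<Psi> M \<rho> S" for S
    unfolding wS_def using trace_perm[OF perm assms(1)] by simp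
  have memb: "(N \<in> \<tau> ` S) = (i \<in> S)" for S
  proof -
    have "(N \<in> \<tau> ` S) = (\<tau> N \<in> \<tau> ` (\<tau> ` S))" using permutes_inj[OF perm] by (simp add: inj_image_mem_iff)
    also have "\<dots> = (i \<in> S)" unfolding img unfolding \<tau>_def by simp
    finally show ?thesis .
  qed
  have "ddF D \<Psi> M \<rho> N j = (\<Sum>S\<in>Aset M j. if N \<in> \<tau> ` S then wS D \<Psi> M \<rho> (\<tau> ` S) else 0)"
    unfolding ddF_def by (rule sum.reindex_bij_betw[OF bij, symmetric])
  also have "\<dots> = ddF D \<Psi> M \<rho> i j" unfolding ddF_def memb w ..
  finally show ?thesis by simp
qed

lemma card_as_sum: fixes S :: "nat set" shows "S \<subseteq> {..<M} \<Longrightarrow> real (card S) = (\<Sum>i<M. if i \<in> S then 1 else 0)"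
proof -
  assume S: "S \<subseteq> {..<M}"
  have "(\<Sum>i<M. if i \<in> S then (1::real) else 0) = (\<Sum>i\<in>{x\<in>{..<M}. x \<in> S}. 1)"
    by (rule sum.inter_filter[symmetric]) (rule finite_lessThan)
  also have "{x\<in>{..<M}. x \<in> S} = S" using S by auto
  finally show ?thesis by simp
qed

lemma Mdd:
  assumes "perm_inv D M \<rho>" "N < M"
  shows "real M * ddF D \<Psi> M \<rho> N j = real j * ccF D \<Psi> M \<rho> j"
proof -
  have "real j * ccF D \<Psi> M \<rho> j = (\<Sum>S\<in>Aset M j. real (card S) * wS D \<Psi> M \<rho> S)"
    unfolding ccF_def by (simp add: sum_distrib_left Aset_def)
  also have "\<dots> = (\<Sum>S\<in>Aset M j. \<Sum>i<M. if i \<in> S then wS D \<Psi> M \<rho> S else 0)"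
  proof (rule sum.cong[OF refl])
    fix S assume "S \<in> Aset M j"
    then have S: "S \<subseteq> {..<M}" unfolding Aset_def by simp
    have "real (card S) * wS D \<Psi> M \<rho> S = (\<Sum>i<M. (if i \<in> S then 1 else 0) * wS D \<Psi> M \<rho> S)"
      unfolding card_as_sum[OF S] by (simp add: sum_distrib_right)
    also have "\<dots> = (\<Sum>i<M. if i \<in> S then wS D \<Psi> M \<rho> S else 0)"
      by (intro sum.cong) auto
    finally show "real (card S) * wS D \<Psi> M \<rho> S = (\<Sum>i<M. if i \<in> S then wS D \<Psi> M \<rho> S else 0)" .
  qed
  also have "\<dots> = (\<Sum>i<M. ddF D \<Psi> M \<rho> i j)" unfolding ddF_def by (rule sum.swap)
  also have "\<dots> = (\<Sum>i<M. ddF D \<Psi> M \<rho> N j)" using ddF_sym[OF assms(1) _ assms(2)] by simp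
  finally show ?thesis by simp
qed


lemma reduction:
  fixes lam :: real
  assumes "0 < D" "(\<Sum>i<D. (cmod (\<Psi> i))\<^sup>2) = 1" "density_op D (Suc N) \<rho>" "perm_inv D (Suc N) \<rho>"
  shows "real (Suc N) * lam * p_rho D \<Psi> lam N \<rho> = (\<Sum>j\<le>Suc N. ccF D \<Psi> (Suc N) \<rho> j * PP lam (Suc N) j)"
    and "real (Suc N) * lam * f_rho D \<Psi> lam N \<rho> = (\<Sum>j\<le>Suc N. ccF D \<Psi> (Suc N) \<rho> j * (PP lam (Suc N) j - qq lam j))"
    and "\<forall>j. 0 \<le> ccF D \<Psi> (Suc N) \<rho> j"
    and "(\<Sum>j\<le>Suc N. ccF D \<Psi> (Suc N) \<rho> j) = 1"
proof -
  let ?M = "Suc N"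
  let ?w = "wS D \<Psi> ?M \<rho>"
  let ?c = "ccF D \<Psi> ?M \<rho>" and ?d = "ddF D \<Psi> ?M \<rho> N"
  have Md: "real ?M * ?d j = real j * ?c j" for j by (rule Mdd[OF assms(4)]) simp
  have "lam * p_rho D \<Psi> lam N \<rho> = (\<Sum>S\<in>Pow {..<?M}. (lam * (\<Prod>i\<in>S. if i < N then lam else 1)) * ?w S)"
    unfolding p_expand by (simp add: sum_distrib_left mult.assoc)
  also have "\<dots> = (\<Sum>S\<in>Pow {..<?M}. (if N \<in> S then lam ^ card S else lam ^ Suc (card S)) * ?w S)"
    by (intro sum.cong refl) (simp add: coef_p)
  also have "\<dots> = (\<Sum>j\<le>?M. lam ^ Suc j * ?c j + (lam ^ j - lam ^ Suc j) * ?d j)"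
    by (rule sum_if_split[where a = "\<lambda>j. lam ^ j" and b = "\<lambda>j. lam ^ Suc j"])
  finally have "real ?M * lam * p_rho D \<Psi> lam N \<rho> = real ?M * (\<Sum>j\<le>?M. lam ^ Suc j * ?c j + (lam ^ j - lam ^ Suc j) * ?d j)"
    by (simp add: mult.assoc)
  also have "\<dots> = (\<Sum>j\<le>?M. lam ^ Suc j * (real ?M * ?c j) + (lam ^ j - lam ^ Suc j) * (real ?M * ?d j))"
    by (simp add: sum_distrib_left algebra_simps)
  also have "\<dots> = (\<Sum>j\<le>?M. ?c j * PP lam ?M j)"
    unfolding Md by (intro sum.cong refl) (simp add: PP_def algebra_simps)
  finally show "real ?M * lam * p_rho D \<Psi> lam N \<rho> = (\<Sum>j\<le>?M. ?c j * PP lam ?M j)" .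
  have "f_rho D \<Psi> lam N \<rho> = (\<Sum>S\<in>Pow {..<?M}. (if N \<in> S then (\<lambda>j. 0) (card S) else lam ^ card S) * ?w S)"
    unfolding f_expand by (intro sum.cong refl) (simp add: coef_f)
  also have "\<dots> = (\<Sum>j\<le>?M. lam ^ j * ?c j + (0 - lam ^ j) * ?d j)"
    by (rule sum_if_split[where a = "\<lambda>j. 0" and b = "\<lambda>j. lam ^ j"])
  finally have "real ?M * lam * f_rho D \<Psi> lam N \<rho> = real ?M * lam * (\<Sum>j\<le>?M. lam ^ j * ?c j + (0 - lam ^ j) * ?d j)"
    by simp
  also have "\<dots> = (\<Sum>j\<le>?M. lam ^ Suc j * (real ?M * ?c j) - lam ^ Suc j * (real ?M * ?d j))"
    by (simp add: sum_distrib_left algebra_simps)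
  also have "\<dots> = (\<Sum>j\<le>?M. ?c j * (PP lam ?M j - qq lam j))"
    unfolding Md by (intro sum.cong refl) (simp add: PP_def qq_def algebra_simps)
  finally show "real ?M * lam * f_rho D \<Psi> lam N \<rho> = (\<Sum>j\<le>?M. ?c j * (PP lam ?M j - qq lam j))" .
  show "\<forall>j. 0 \<le> ?c j" unfolding ccF_def using wS_nonneg[OF assms(1,2,3)] by (simp add: sum_nonneg)
  have "(\<Sum>j\<le>?M. ?c j) = (\<Sum>S\<in>Pow {..<?M}. ?w S)" unfolding ccF_def by (rule group_Pow[symmetric])
  also have "\<dots> = 1" by (rule sum_wS[OF assms(3)])
  finally show "(\<Sum>j\<le>?M. ?c j) = 1" .
qed


lemma sum_two_first:
  fixes g :: "nat \<Rightarrow> 'a::comm_monoid_add"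
  assumes "2 \<le> D" "\<And>a. 2 \<le> a \<Longrightarrow> g a = 0"
  shows "(\<Sum>a<D. g a) = g 0 + g 1"
proof -
  have "(\<Sum>a<D. g a) = (\<Sum>a\<in>{0,1}. g a)"
    using assms by (intro sum.mono_neutral_right) auto
  then show ?thesis by simp
qed

lemma exists_phi:
  fixes \<Psi> :: "nat \<Rightarrow> complex"
  assumes "2 \<le> D" "(\<Sum>i<D. (cmod (\<Psi> i))\<^sup>2) = 1"
  shows "\<exists>\<phi>. (\<Sum>a<D. cnj (\<Psi> a) * \<phi> a) = 0 \<and> (\<Sum>a<D. cnj (\<phi> a) * \<phi> a) = 1"
proof (cases "\<Psi> 0 = 0 \<and> \<Psi> 1 = 0")
  case True
  define \<phi> where "\<phi> = (\<lambda>a::nat. if a = 0 then (1::complex) else 0)"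
  have "(\<Sum>a<D. cnj (\<Psi> a) * \<phi> a) = cnj (\<Psi> 0) * \<phi> 0 + cnj (\<Psi> 1) * \<phi> 1"
    using assms by (intro sum_two_first) (auto simp: \<phi>_def)
  moreover have "(\<Sum>a<D. cnj (\<phi> a) * \<phi> a) = cnj (\<phi> 0) * \<phi> 0 + cnj (\<phi> 1) * \<phi> 1"
    using assms by (intro sum_two_first) (auto simp: \<phi>_def)
  ultimately show ?thesis using True by (intro exI[of _ \<phi>]) (simp add: \<phi>_def)
next
  case False
  define s where "s = (cmod (\<Psi> 0))\<^sup>2 + (cmod (\<Psi> 1))\<^sup>2"
  have s0: "0 < s" unfolding s_def using False
    by (cases "\<Psi> 0 = 0") (auto intro: add_pos_nonneg add_nonneg_pos)
  define n where "n = complex_of_real (sqrt s)"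
  have n0: "n \<noteq> 0" unfolding n_def using s0 by simp
  have cn: "cnj n = n" unfolding n_def by simp
  have ss: "sqrt s * sqrt s = s" using s0 by simp
  have nn: "n * n = complex_of_real s" unfolding n_def of_real_mult[symmetric] ss ..
  have sc: "complex_of_real s = \<Psi> 0 * cnj (\<Psi> 0) + \<Psi> 1 * cnj (\<Psi> 1)"
    unfolding s_def of_real_add complex_norm_square ..
  define \<phi> where "\<phi> = (\<lambda>a::nat. if a = 0 then - cnj (\<Psi> 1) / n else if a = 1 then cnj (\<Psi> 0) / n else 0)"
  have "(\<Sum>a<D. cnj (\<Psi> a) * \<phi> a) = cnj (\<Psi> 0) * \<phi> 0 + cnj (\<Psi> 1) * \<phi> 1"
    using assms by (intro sum_two_first) (auto simp: \<phi>_def)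
  also have "\<dots> = (cnj (\<Psi> 1) * cnj (\<Psi> 0) - cnj (\<Psi> 0) * cnj (\<Psi> 1)) / n" unfolding \<phi>_def
    by (simp add: diff_divide_distrib)
  also have "\<dots> = 0" by simp
  finally have o: "(\<Sum>a<D. cnj (\<Psi> a) * \<phi> a) = 0" .
  have "(\<Sum>a<D. cnj (\<phi> a) * \<phi> a) = cnj (\<phi> 0) * \<phi> 0 + cnj (\<phi> 1) * \<phi> 1"
    using assms by (intro sum_two_first) (auto simp: \<phi>_def)
  also have "\<dots> = (\<Psi> 1 * cnj (\<Psi> 1)) / (n * n) + (\<Psi> 0 * cnj (\<Psi> 0)) / (n * n)"
    unfolding \<phi>_def by (simp add: cn)
  also have "\<dots> = (\<Psi> 0 * cnj (\<Psi> 0) + \<Psi> 1 * cnj (\<Psi> 1)) / (n * n)"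
    by (simp add: add_divide_distrib[symmetric] add.commute)
  also have "\<dots> = 1" unfolding nn sc[symmetric] using s0 by simp
  finally show ?thesis using o by blast
qed

lemma ip_proj:
  "(\<Sum>a<D. \<Sum>b<D. proj \<Psi> a b * u b * cnj (u a)) = (\<Sum>a<D. \<Psi> a * cnj (u a)) * (\<Sum>b<D. cnj (\<Psi> b) * u b)"
  unfolding proj_def by (simp add: sum_product algebra_simps)

lemma ip_Q:
  "(\<Sum>a<D. \<Sum>b<D. Qop \<Psi> a b * u b * cnj (u a)) = (\<Sum>a<D. cnj (u a) * u a) - (\<Sum>a<D. \<Psi> a * cnj (u a)) * (\<Sum>b<D. cnj (\<Psi> b) * u b)"
proof -
  have "(\<Sum>a<D. \<Sum>b<D. Qop \<Psi> a b * u b * cnj (u a))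
     = (\<Sum>a<D. \<Sum>b<D. (if a = b then u b * cnj (u a) else 0) - proj \<Psi> a b * u b * cnj (u a))"
    unfolding Qop_def by (intro sum.cong refl) (simp add: algebra_simps)
  also have "\<dots> = (\<Sum>a<D. (\<Sum>b<D. (if a = b then u b * cnj (u a) else 0)) - (\<Sum>b<D. proj \<Psi> a b * u b * cnj (u a)))"
    by (simp only: sum_subtractf)
  also have "\<dots> = (\<Sum>a<D. cnj (u a) * u a - (\<Sum>b<D. proj \<Psi> a b * u b * cnj (u a)))"
    by (intro sum.cong refl) (simp add: mult.commute)
  also have "\<dots> = (\<Sum>a<D. cnj (u a) * u a) - (\<Sum>a<D. \<Sum>b<D. proj \<Psi> a b * u b * cnj (u a))"
    by (simp only: sum_subtractf)
  finally show ?thesis unfolding ip_proj .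
qed


definition Phi :: "(nat \<Rightarrow> complex) \<Rightarrow> (nat \<Rightarrow> complex) \<Rightarrow> nat \<Rightarrow> nat set \<Rightarrow> nat list \<Rightarrow> complex" where
  "Phi \<Psi> \<phi> M S x = (\<Prod>i<M. (if i \<in> S then \<phi> else \<Psi>) (x ! i))"

definition coefC :: "nat \<Rightarrow> (nat \<Rightarrow> real) \<Rightarrow> nat set \<Rightarrow> real" where
  "coefC M c S = c (card S) / real (M choose card S)"

definition rhoC :: "(nat \<Rightarrow> complex) \<Rightarrow> (nat \<Rightarrow> complex) \<Rightarrow> nat \<Rightarrow> (nat \<Rightarrow> real) \<Rightarrow> nat list \<Rightarrow> nat list \<Rightarrow> complex" where
  "rhoC \<Psi> \<phi> M c x y = (\<Sum>S\<in>Pow {..<M}. complex_of_real (coefC M c S) * Phi \<Psi> \<phi> M S x * cnj (Phi \<Psi> \<phi> M S y))"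

lemma coefC_nonneg:
  assumes "\<forall>j\<le>M. 0 \<le> c j" "S \<subseteq> {..<M}"
  shows "0 \<le> coefC M c S"
proof -
  have "card S \<le> M" using card_mono[OF finite_lessThan assms(2)] by simp
  then show ?thesis unfolding coefC_def using assms(1) by simp
qed

lemma quad_rhoC:
  "quad D M (rhoC \<Psi> \<phi> M c) v = complex_of_real (\<Sum>S\<in>Pow {..<M}. coefC M c S *
       (cmod (\<Sum>x\<in>idx D M. cnj (v x) * Phi \<Psi> \<phi> M S x))\<^sup>2)"
proof -
  let ?z = "\<lambda>S. \<Sum>x\<in>idx D M. cnj (v x) * Phi \<Psi> \<phi> M S x"
  have "quad D M (rhoC \<Psi> \<phi> M c) v = (\<Sum>x\<in>idx D M. \<Sum>y\<in>idx D M. \<Sum>S\<in>Pow {..<M}.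
      complex_of_real (coefC M c S) * ((cnj (v x) * Phi \<Psi> \<phi> M S x) * (cnj (Phi \<Psi> \<phi> M S y) * v y)))"
    unfolding quad_def rhoC_def by (simp add: sum_distrib_left sum_distrib_right algebra_simps)
  also have "\<dots> = (\<Sum>S\<in>Pow {..<M}. \<Sum>x\<in>idx D M. \<Sum>y\<in>idx D M.
      complex_of_real (coefC M c S) * ((cnj (v x) * Phi \<Psi> \<phi> M S x) * (cnj (Phi \<Psi> \<phi> M S y) * v y)))"
    by (subst sum.swap) (simp add: sum.swap[of _ "idx D M" "Pow {..<M}"])
  also have "\<dots> = (\<Sum>S\<in>Pow {..<M}. complex_of_real (coefC M c S) * (?z S * cnj (?z S)))"
  proof (rule sum.cong[OF refl])
    fix S
    have e: "(\<Sum>y\<in>idx D M. cnj (Phi \<Psi> \<phi> M S y) * v y) = cnj (?z S)" by (simp add: mult.commute)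
    have "(\<Sum>x\<in>idx D M. \<Sum>y\<in>idx D M. complex_of_real (coefC M c S) * ((cnj (v x) * Phi \<Psi> \<phi> M S x) * (cnj (Phi \<Psi> \<phi> M S y) * v y)))
       = complex_of_real (coefC M c S) * (?z S * (\<Sum>y\<in>idx D M. cnj (Phi \<Psi> \<phi> M S y) * v y))"
      unfolding sum_product by (simp add: sum_distrib_left)
    then show "(\<Sum>x\<in>idx D M. \<Sum>y\<in>idx D M. complex_of_real (coefC M c S) * ((cnj (v x) * Phi \<Psi> \<phi> M S x) * (cnj (Phi \<Psi> \<phi> M S y) * v y)))
       = complex_of_real (coefC M c S) * (?z S * cnj (?z S))" unfolding e .
  qed
  also have "\<dots> = (\<Sum>S\<in>Pow {..<M}. complex_of_real (coefC M c S * (cmod (?z S))\<^sup>2))"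
    by (simp only: of_real_mult complex_norm_square)
  finally show ?thesis by simp
qed

lemma norm_Phi:
  assumes "(\<Sum>a<D. cnj (\<Psi> a) * \<Psi> a) = 1" "(\<Sum>a<D. cnj (\<phi> a) * \<phi> a) = 1"
  shows "(\<Sum>x\<in>idx D M. Phi \<Psi> \<phi> M S x * cnj (Phi \<Psi> \<phi> M S x)) = 1"
proof -
  have "(\<Sum>x\<in>idx D M. Phi \<Psi> \<phi> M S x * cnj (Phi \<Psi> \<phi> M S x))
     = (\<Sum>x\<in>idx D M. \<Prod>i<M. (if i \<in> S then \<phi> else \<Psi>) (x ! i) * cnj ((if i \<in> S then \<phi> else \<Psi>) (x ! i)))"
    unfolding Phi_def by (simp add: prod.distrib)
  also have "\<dots> = (\<Prod>i<M. \<Sum>a<D. (if i \<in> S then \<phi> else \<Psi>) a * cnj ((if i \<in> S then \<phi> else \<Psi>) a))"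
    by (rule sum_prod_idx)
  also have "\<dots> = 1" using assms by (intro prod.neutral) (auto simp: mult.commute)
  finally show ?thesis .
qed

lemma sum_coefC:
  assumes "(\<Sum>j\<le>M. c j) = 1"
  shows "(\<Sum>S\<in>Pow {..<M}. coefC M c S) = 1"
proof -
  have "(\<Sum>S\<in>Pow {..<M}. coefC M c S) = (\<Sum>j\<le>M. \<Sum>S\<in>Aset M j. coefC M c S)" by (rule group_Pow)
  also have "\<dots> = (\<Sum>j\<le>M. c j)"
  proof (rule sum.cong[OF refl])
    fix j assume j: "j \<in> {..M}"
    have cA: "card (Aset M j) = M choose j" unfolding Aset_def using n_subsets[of "{..<M}" j] by simp
    have nz: "real (M choose j) \<noteq> 0" using j by simp
    have "(\<Sum>S\<in>Aset M j. coefC M c S) = (\<Sum>S\<in>Aset M j. c j / real (M choose j))"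
      unfolding coefC_def Aset_def by (intro sum.cong) auto
    also have "\<dots> = c j" using cA nz by simp
    finally show "(\<Sum>S\<in>Aset M j. coefC M c S) = c j" .
  qed
  finally show ?thesis using assms by simp
qed

lemma rhoC_density:
  assumes "\<forall>j\<le>M. 0 \<le> c j" "(\<Sum>j\<le>M. c j) = 1"
    "(\<Sum>a<D. cnj (\<Psi> a) * \<Psi> a) = 1" "(\<Sum>a<D. cnj (\<phi> a) * \<phi> a) = 1"
  shows "density_op D M (rhoC \<Psi> \<phi> M c)"
  unfolding density_op_def
proof (intro conjI allI)
  fix v :: "nat list \<Rightarrow> complex"
  have q: "(\<Sum>x\<in>idx D M. \<Sum>y\<in>idx D M. cnj (v x) * rhoC \<Psi> \<phi> M c x y * v y) = quad D M (rhoC \<Psi> \<phi> M c) v"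
    unfolding quad_def ..
  show "(\<Sum>x\<in>idx D M. \<Sum>y\<in>idx D M. cnj (v x) * rhoC \<Psi> \<phi> M c x y * v y) \<in> \<real>"
    unfolding q quad_rhoC by simp
  show "0 \<le> Re (\<Sum>x\<in>idx D M. \<Sum>y\<in>idx D M. cnj (v x) * rhoC \<Psi> \<phi> M c x y * v y)"
    unfolding q quad_rhoC using coefC_nonneg[OF assms(1)] by (auto intro!: sum_nonneg)
next
  have "(\<Sum>x\<in>idx D M. rhoC \<Psi> \<phi> M c x x)
     = (\<Sum>S\<in>Pow {..<M}. complex_of_real (coefC M c S) * (\<Sum>x\<in>idx D M. Phi \<Psi> \<phi> M S x * cnj (Phi \<Psi> \<phi> M S x)))"
    unfolding rhoC_def by (simp add: sum_distrib_left mult.assoc sum.swap[of _ "idx D M"])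
  also have "\<dots> = complex_of_real (\<Sum>S\<in>Pow {..<M}. coefC M c S)"
    using norm_Phi[OF assms(3,4)] by simp
  also have "\<dots> = 1" using sum_coefC[OF assms(2)] by simp
  finally show "(\<Sum>x\<in>idx D M. rhoC \<Psi> \<phi> M c x x) = 1" .
qed


lemma Phi_perm:
  assumes "\<sigma> permutes {..<M}"
  shows "Phi \<Psi> \<phi> M S (perm_idx M \<sigma> x) = Phi \<Psi> \<phi> M (\<sigma> ` S) x"
proof -
  have "Phi \<Psi> \<phi> M S (perm_idx M \<sigma> x) = (\<Prod>k<M. (if k \<in> S then \<phi> else \<Psi>) (x ! \<sigma> k))"
    unfolding Phi_def by (intro prod.cong) (auto simp: perm_idx_nth)
  also have "\<dots> = (\<Prod>j<M. (if j \<in> \<sigma> ` S then \<phi> else \<Psi>) (x ! j))"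
    using prod_perm_reindex[OF assms, of "\<lambda>b j. (if b then \<phi> else \<Psi>) (x ! j)"] by simp
  finally show ?thesis unfolding Phi_def .
qed

lemma bij_image_Pow:
  assumes "\<sigma> permutes {..<M}"
  shows "bij_betw ((`) \<sigma>) (Pow {..<M}) (Pow {..<M})"
proof (rule bij_betw_byWitness[where f' = "(`) (inv \<sigma>)"])
  have i1: "inv \<sigma> (\<sigma> x) = x" "\<sigma> (inv \<sigma> x) = x" for x using permutes_inverses[OF assms] by auto
  show "\<forall>a\<in>Pow {..<M}. inv \<sigma> ` \<sigma> ` a = a" by (simp add: image_image i1)
  show "\<forall>a\<in>Pow {..<M}. \<sigma> ` inv \<sigma> ` a = a" by (simp add: image_image i1)
  show "(`) \<sigma> ` Pow {..<M} \<subseteq> Pow {..<M}" using permutes_image[OF assms] by auto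
  show "(`) (inv \<sigma>) ` Pow {..<M} \<subseteq> Pow {..<M}" using permutes_image[OF permutes_inv[OF assms]] by auto
qed

lemma rhoC_perm: "perm_inv D M (rhoC \<Psi> \<phi> M c)"
  unfolding perm_inv_def
proof (intro allI impI ballI)
  fix \<sigma> x y assume \<sigma>: "\<sigma> permutes {..<M}"
  have card: "card (\<sigma> ` S) = card S" for S using permutes_inj[OF \<sigma>] by (simp add: card_image inj_on_subset)
  have "rhoC \<Psi> \<phi> M c (perm_idx M \<sigma> x) (perm_idx M \<sigma> y)
      = (\<Sum>S\<in>Pow {..<M}. (\<lambda>T. complex_of_real (coefC M c T) * Phi \<Psi> \<phi> M T x * cnj (Phi \<Psi> \<phi> M T y)) (\<sigma> ` S))"
    unfolding rhoC_def Phi_perm[OF \<sigma>] coefC_def card ..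
  also have "\<dots> = rhoC \<Psi> \<phi> M c x y"
    unfolding rhoC_def by (rule sum.reindex_bij_betw[OF bij_image_Pow[OF \<sigma>]])
  finally show "rhoC \<Psi> \<phi> M c (perm_idx M \<sigma> x) (perm_idx M \<sigma> y) = rhoC \<Psi> \<phi> M c x y" .
qed

lemma ip_val:
  assumes "(\<Sum>a<D. cnj (\<Psi> a) * \<Psi> a) = 1" "(\<Sum>a<D. cnj (\<phi> a) * \<phi> a) = 1"
    "(\<Sum>a<D. cnj (\<Psi> a) * \<phi> a) = 0"
  shows "(\<Sum>a<D. \<Sum>b<D. Aop \<Psi> b1 a b * (if b2 then \<phi> else \<Psi>) b * cnj ((if b2 then \<phi> else \<Psi>) a))
       = (if b1 = b2 then 1 else 0)"
proof -
  have s1: "(\<Sum>a<D. \<Psi> a * cnj (\<Psi> a)) = 1" using assms(1) by (simp add: mult.commute)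
  have s2: "(\<Sum>a<D. \<Psi> a * cnj (\<phi> a)) = 0"
  proof -
    have "(\<Sum>a<D. \<Psi> a * cnj (\<phi> a)) = cnj (\<Sum>a<D. cnj (\<Psi> a) * \<phi> a)" by simp
    then show ?thesis using assms(3) by simp
  qed
  show ?thesis
    using assms s1 s2 by (cases b1; cases b2) (simp_all add: Aop_def ip_proj ip_Q)
qed

lemma prod_indicator_eq:
  fixes S S' :: "nat set"
  assumes "S \<subseteq> {..<M}" "S' \<subseteq> {..<M}"
  shows "(\<Prod>i<M. if (i \<in> S') = (i \<in> S) then (1::complex) else 0) = (if S = S' then 1 else 0)"
proof (cases "S = S'")
  case True then show ?thesis by simp
next
  case False
  then obtain i where "i \<in> S \<and> i \<notin> S' \<or> i \<in> S' \<and> i \<notin> S" by blast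
  then have i: "i < M" "(i \<in> S') \<noteq> (i \<in> S)" using assms by auto
  have "(\<Prod>i<M. if (i \<in> S') = (i \<in> S) then (1::complex) else 0) = 0"
    using i by (subst prod_zero_iff) auto
  then show ?thesis using False by simp
qed

lemma trAB_rhoC:
  assumes "(\<Sum>a<D. cnj (\<Psi> a) * \<Psi> a) = 1" "(\<Sum>a<D. cnj (\<phi> a) * \<phi> a) = 1"
    "(\<Sum>a<D. cnj (\<Psi> a) * \<phi> a) = 0" "S' \<subseteq> {..<M}"
  shows "trAB D M (PiS \<Psi> M S') (rhoC \<Psi> \<phi> M c) = complex_of_real (coefC M c S')"
proof -
  let ?U = "\<lambda>S i. if i \<in> S then \<phi> else \<Psi>"
  have "trAB D M (PiS \<Psi> M S') (rhoC \<Psi> \<phi> M c)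
     = (\<Sum>S\<in>Pow {..<M}. complex_of_real (coefC M c S) * (\<Sum>x\<in>idx D M. \<Sum>y\<in>idx D M.
          PiS \<Psi> M S' x y * (Phi \<Psi> \<phi> M S y * cnj (Phi \<Psi> \<phi> M S x))))"
    unfolding trAB_def rhoC_def
    by (simp add: sum_distrib_left sum_distrib_right algebra_simps sum.swap[of _ "Pow {..<M}"])
  also have "\<dots> = (\<Sum>S\<in>Pow {..<M}. complex_of_real (coefC M c S) * (\<Sum>x\<in>idx D M. \<Sum>y\<in>idx D M.
          \<Prod>i<M. Aop \<Psi> (i \<in> S') (x ! i) (y ! i) * ?U S i (y ! i) * cnj (?U S i (x ! i))))"
    unfolding PiS_def Phi_def by (simp add: prod.distrib mult.assoc)
  also have "\<dots> = (\<Sum>S\<in>Pow {..<M}. complex_of_real (coefC M c S) *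
          (\<Prod>i<M. \<Sum>a<D. \<Sum>b<D. Aop \<Psi> (i \<in> S') a b * ?U S i b * cnj (?U S i a)))"
  proof (rule sum.cong[OF refl])
    fix S
    show "complex_of_real (coefC M c S) * (\<Sum>x\<in>idx D M. \<Sum>y\<in>idx D M.
          \<Prod>i<M. Aop \<Psi> (i \<in> S') (x ! i) (y ! i) * ?U S i (y ! i) * cnj (?U S i (x ! i)))
        = complex_of_real (coefC M c S) *
          (\<Prod>i<M. \<Sum>a<D. \<Sum>b<D. Aop \<Psi> (i \<in> S') a b * ?U S i b * cnj (?U S i a))"
      using sum2_prod_idx[of "\<lambda>i a b. Aop \<Psi> (i \<in> S') a b * ?U S i b * cnj (?U S i a)" M D] by simp
  qed
  also have "\<dots> = (\<Sum>S\<in>Pow {..<M}. complex_of_real (coefC M c S) *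
          (\<Prod>i<M. if (i \<in> S') = (i \<in> S) then 1 else 0))"
    using ip_val[OF assms(1-3)] by simp
  also have "\<dots> = (\<Sum>S\<in>Pow {..<M}. if S = S' then complex_of_real (coefC M c S) else 0)"
    by (intro sum.cong refl) (use prod_indicator_eq assms(4) in auto)
  also have "\<dots> = complex_of_real (coefC M c S')" using assms(4) by simp
  finally show ?thesis .
qed

lemma ccF_rhoC:
  assumes "(\<Sum>a<D. cnj (\<Psi> a) * \<Psi> a) = 1" "(\<Sum>a<D. cnj (\<phi> a) * \<phi> a) = 1"
    "(\<Sum>a<D. cnj (\<Psi> a) * \<phi> a) = 0" "j \<le> M"
  shows "ccF D \<Psi> M (rhoC \<Psi> \<phi> M c) j = c j"
proof -
  have cA: "card (Aset M j) = M choose j" unfolding Aset_def using n_subsets[of "{..<M}" j] by simp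
  have nz: "real (M choose j) \<noteq> 0" using assms(4) by simp
  have "ccF D \<Psi> M (rhoC \<Psi> \<phi> M c) j = (\<Sum>S\<in>Aset M j. c j / real (M choose j))"
    unfolding ccF_def wS_def
    by (intro sum.cong refl) (auto simp: Aset_def trAB_rhoC[OF assms(1-3)] coefC_def)
  also have "\<dots> = c j" using cA nz by simp
  finally show ?thesis .
qed


lemma PPq_nonneg:
  assumes "0 < lam" "lam < 1" "j \<le> M"
  shows "0 \<le> PP lam M j - qq lam j"
proof -
  have "PP lam M j - qq lam j = lam ^ Suc j * (real M - real j)"
    unfolding PP_def qq_def by (simp add: algebra_simps)
  then show ?thesis using assms by simp
qed

lemma Fver_iff:
  fixes \<epsilon> \<delta> lam :: real
  assumes D2: "D \<ge> 2" and nrm: "(\<Sum>i<D. (cmod (\<Psi> i))\<^sup>2) = 1"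
    and e: "0 < \<epsilon>" "\<epsilon> < 1" and d: "0 < \<delta>" "\<delta> < 1" and l: "0 < lam" "lam < 1" and N1: "1 \<le> N"
  shows "1 - \<epsilon> \<le> Fver D \<Psi> N \<delta> lam \<longleftrightarrow> (\<exists>k. Ntil \<epsilon> \<delta> lam k \<le> real N)"
proof -
  define M where "M = Suc N"
  define X where "X = real M * lam * \<delta>"
  have M2: "2 \<le> M" using N1 unfolding M_def by simp
  have Mpos: "0 < real M * lam" using l M2 by simp
  have X0: "0 < X" unfolding X_def using Mpos d by simp
  have XM: "X \<le> real M * lam" unfolding X_def using Mpos d mult_left_le[of \<delta> "real M * lam"] by simp
  have D0: "0 < D" using D2 by simp
  have nc: "(\<Sum>r<D. cnj (\<Psi> r) * \<Psi> r) = 1" by (rule norm_sum_c[OF nrm])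
  obtain \<phi> where orth: "(\<Sum>a<D. cnj (\<Psi> a) * \<phi> a) = 0" and nphi: "(\<Sum>a<D. cnj (\<phi> a) * \<phi> a) = 1"
    using exists_phi[OF D2 nrm] by blast
  have Num_iff: "0 \<le> NumF \<epsilon> lam M X k \<longleftrightarrow> Ntil \<epsilon> \<delta> lam k \<le> real N" for k
  proof -
    have "NumF \<epsilon> lam M X k = real M * lam ^ (Suc k) * (lam * (1 - lam) * \<delta> * \<epsilon>) * (real N - Ntil \<epsilon> \<delta> lam k)"
      unfolding NumF_def X_def by (rule Num_eq[OF e(1) d(1) l M_def])
    moreover have "0 < real M * lam ^ (Suc k) * (lam * (1 - lam) * \<delta> * \<epsilon>)" using M2 l d e by simp
    moreover have gen: "\<And>A y::real. 0 < A \<Longrightarrow> (0 \<le> A * y) = (0 \<le> y)" by (simp add: zero_le_mult_iff)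
    ultimately show ?thesis by simp
  qed
  define Sset where "Sset = {f_rho D \<Psi> lam N \<rho> / p_rho D \<Psi> lam N \<rho> | \<rho>.
      density_op D (N+1) \<rho> \<and> perm_inv D (N+1) \<rho> \<and> p_rho D \<Psi> lam N \<rho> \<ge> \<delta>}"
  have Fv: "Fver D \<Psi> N \<delta> lam = Inf Sset" unfolding Fver_def Sset_def ..
  have trans: "X \<le> (\<Sum>j\<le>M. ccF D \<Psi> M \<rho> j * PP lam M j) \<longleftrightarrow> \<delta> \<le> p_rho D \<Psi> lam N \<rho>"
    and trans2: "(\<Sum>j\<le>M. ccF D \<Psi> M \<rho> j * hh \<epsilon> lam M j)
        = real M * lam * (f_rho D \<Psi> lam N \<rho> - (1 - \<epsilon>) * p_rho D \<Psi> lam N \<rho>)"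
    and fnn: "0 \<le> f_rho D \<Psi> lam N \<rho>"
    if \<rho>: "density_op D M \<rho>" "perm_inv D M \<rho>" for \<rho>
  proof -
    note R = reduction(1,2)[where lam=lam, OF D0 nrm \<rho>[unfolded M_def], folded M_def]
      reduction(3)[OF D0 nrm \<rho>[unfolded M_def], folded M_def]
    show "X \<le> (\<Sum>j\<le>M. ccF D \<Psi> M \<rho> j * PP lam M j) \<longleftrightarrow> \<delta> \<le> p_rho D \<Psi> lam N \<rho>"
      unfolding R(1)[symmetric] X_def using Mpos by (simp only: mult_le_cancel_left_pos)
    have "(\<Sum>j\<le>M. ccF D \<Psi> M \<rho> j * hh \<epsilon> lam M j)
        = (\<Sum>j\<le>M. ccF D \<Psi> M \<rho> j * (PP lam M j - qq lam j)) - (1 - \<epsilon>) * (\<Sum>j\<le>M. ccF D \<Psi> M \<rho> j * PP lam M j)"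
      unfolding hh_def by (simp add: sum_distrib_left sum_subtractf algebra_simps)
    also have "\<dots> = real M * lam * (f_rho D \<Psi> lam N \<rho> - (1 - \<epsilon>) * p_rho D \<Psi> lam N \<rho>)"
      unfolding R(1)[symmetric] R(2)[symmetric] by (simp add: algebra_simps)
    finally show "(\<Sum>j\<le>M. ccF D \<Psi> M \<rho> j * hh \<epsilon> lam M j)
        = real M * lam * (f_rho D \<Psi> lam N \<rho> - (1 - \<epsilon>) * p_rho D \<Psi> lam N \<rho>)" .
    have "0 \<le> (\<Sum>j\<le>M. ccF D \<Psi> M \<rho> j * (PP lam M j - qq lam j))"
      using R(3) PPq_nonneg[OF l] by (intro sum_nonneg mult_nonneg_nonneg) auto
    then have "0 \<le> real M * lam * f_rho D \<Psi> lam N \<rho>" unfolding R(2) .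
    then show "0 \<le> f_rho D \<Psi> lam N \<rho>" using Mpos by (simp add: zero_le_mult_iff)
  qed
  have mk: "\<exists>\<rho>. density_op D M \<rho> \<and> perm_inv D M \<rho> \<and> (\<forall>j\<le>M. ccF D \<Psi> M \<rho> j = c j)"
    if "\<forall>j\<le>M. 0 \<le> c j" "(\<Sum>j\<le>M. c j) = 1" for c
    using rhoC_density[OF that nc nphi] rhoC_perm ccF_rhoC[OF nc nphi orth] by blast
  have sums_eq: "(\<Sum>j\<le>M. ccF D \<Psi> M \<rho> j * g j) = (\<Sum>j\<le>M. c j * g j)"
    if "\<forall>j\<le>M. ccF D \<Psi> M \<rho> j = c j" for \<rho> c and g :: "nat \<Rightarrow> real"
    using that by (intro sum.cong) auto
  have ne: "Sset \<noteq> {}"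
  proof -
    define c0 where "c0 = (\<lambda>j::nat. if j = 0 then (1::real) else 0)"
    have "\<forall>j\<le>M. 0 \<le> c0 j" "(\<Sum>j\<le>M. c0 j) = 1" unfolding c0_def by auto
    then obtain \<rho> where \<rho>: "density_op D M \<rho>" "perm_inv D M \<rho>" "\<forall>j\<le>M. ccF D \<Psi> M \<rho> j = c0 j"
      using mk by blast
    have "(\<Sum>j\<le>M. ccF D \<Psi> M \<rho> j * PP lam M j) = (\<Sum>j\<le>M. c0 j * PP lam M j)" by (rule sums_eq[OF \<rho>(3)])
    also have "\<dots> = (\<Sum>j\<le>M. if j = 0 then PP lam M 0 else 0)" unfolding c0_def by (intro sum.cong) auto
    also have "\<dots> = PP lam M 0" by simp
    also have "\<dots> = real M * lam" unfolding PP_def by simp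
    finally have "X \<le> (\<Sum>j\<le>M. ccF D \<Psi> M \<rho> j * PP lam M j)" using XM by simp
    then have "\<delta> \<le> p_rho D \<Psi> lam N \<rho>" using trans[OF \<rho>(1,2)] by simp
    then show ?thesis unfolding Sset_def using \<rho> M_def by auto
  qed
  show ?thesis
  proof
    assume F: "1 - \<epsilon> \<le> Fver D \<Psi> N \<delta> lam"
    show "\<exists>k. Ntil \<epsilon> \<delta> lam k \<le> real N"
    proof (rule ccontr)
      assume "\<not> (\<exists>k. Ntil \<epsilon> \<delta> lam k \<le> real N)"
      then have "\<not> (\<exists>k. 0 \<le> NumF \<epsilon> lam M X k)" using Num_iff by simp
      then obtain c where c: "\<forall>j\<le>M. 0 \<le> c j" "(\<Sum>j\<le>M. c j) = 1" "X \<le> (\<Sum>j\<le>M. c j * PP lam M j)"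
        "(\<Sum>j\<le>M. c j * hh \<epsilon> lam M j) < 0"
        using classical(2)[OF e l M2 X0 XM] by blast
      obtain \<rho> where \<rho>: "density_op D M \<rho>" "perm_inv D M \<rho>" "\<forall>j\<le>M. ccF D \<Psi> M \<rho> j = c j"
        using mk[OF c(1,2)] by blast
      have pd: "\<delta> \<le> p_rho D \<Psi> lam N \<rho>" using trans[OF \<rho>(1,2)] c(3) sums_eq[OF \<rho>(3)] by simp
      have "real M * lam * (f_rho D \<Psi> lam N \<rho> - (1 - \<epsilon>) * p_rho D \<Psi> lam N \<rho>) < 0"
        using trans2[OF \<rho>(1,2)] c(4) sums_eq[OF \<rho>(3)] by simp
      then have "f_rho D \<Psi> lam N \<rho> < (1 - \<epsilon>) * p_rho D \<Psi> lam N \<rho>" using Mpos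
        using l by (simp add: mult_less_0_iff)
      then have lt: "f_rho D \<Psi> lam N \<rho> / p_rho D \<Psi> lam N \<rho> < 1 - \<epsilon>" using pd d
        by (simp add: divide_less_eq)
      have mem: "f_rho D \<Psi> lam N \<rho> / p_rho D \<Psi> lam N \<rho> \<in> Sset"
        unfolding Sset_def using \<rho> pd M_def by auto
      have bdd: "bdd_below Sset"
      proof (rule bdd_belowI)
        fix s assume "s \<in> Sset"
        then obtain \<sigma> where "s = f_rho D \<Psi> lam N \<sigma> / p_rho D \<Psi> lam N \<sigma>" "density_op D M \<sigma>"
          "perm_inv D M \<sigma>" "\<delta> \<le> p_rho D \<Psi> lam N \<sigma>" unfolding Sset_def M_def by auto
        then show "0 \<le> s" using fnn d by simp
      qed
      have "Inf Sset \<le> f_rho D \<Psi> lam N \<rho> / p_rho D \<Psi> lam N \<rho>" by (rule cInf_lower[OF mem bdd])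
      then show False using F Fv lt by simp
    qed
  next
    assume "\<exists>k. Ntil \<epsilon> \<delta> lam k \<le> real N"
    then have ex: "\<exists>k. 0 \<le> NumF \<epsilon> lam M X k" using Num_iff by simp
    have "1 - \<epsilon> \<le> Inf Sset"
    proof (rule cInf_greatest[OF ne])
      fix s assume "s \<in> Sset"
      then obtain \<rho> where s: "s = f_rho D \<Psi> lam N \<rho> / p_rho D \<Psi> lam N \<rho>" and \<rho>: "density_op D M \<rho>"
        "perm_inv D M \<rho>" and pd: "\<delta> \<le> p_rho D \<Psi> lam N \<rho>" unfolding Sset_def M_def by auto
      have "0 \<le> (\<Sum>j\<le>M. ccF D \<Psi> M \<rho> j * hh \<epsilon> lam M j)"
        using classical(1)[OF e l M2 X0 XM ex] reduction(3,4)[OF D0 nrm \<rho>[unfolded M_def], folded M_def]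
          trans[OF \<rho>] pd by blast
      then have "0 \<le> real M * lam * (f_rho D \<Psi> lam N \<rho> - (1 - \<epsilon>) * p_rho D \<Psi> lam N \<rho>)"
        using trans2[OF \<rho>] by simp
      then have "(1 - \<epsilon>) * p_rho D \<Psi> lam N \<rho> \<le> f_rho D \<Psi> lam N \<rho>" using Mpos
        by (simp add: zero_le_mult_iff)
      then show "1 - \<epsilon> \<le> s" unfolding s using pd d by (simp add: le_divide_eq)
    qed
    then show "1 - \<epsilon> \<le> Fver D \<Psi> N \<delta> lam" using Fv by simp
  qed
qed


lemma Ntil_pos:
  fixes \<epsilon> \<delta> lam :: real
  assumes "0 < \<epsilon>" "\<epsilon> < 1" "0 < \<delta>" "\<delta> < 1" "0 < lam" "lam < 1"
    and k: "\<delta> * ((1 - \<epsilon>) + lam * \<epsilon>) \<le> lam ^ k"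
  shows "0 < Ntil \<epsilon> \<delta> lam k"
proof -
  define c where "c = (1 - \<epsilon>) + lam * \<epsilon>"
  have "c - lam = (1 - lam) * (1 - \<epsilon>)" unfolding c_def by (simp add: algebra_simps)
  then have cl: "0 < c - lam" using assms by simp
  have num: "real k * (1 - lam)^2 * \<delta> * (1 - \<epsilon>) + lam ^ (k+1) + lam * \<delta> * (real k * (1 - lam) - 1)
      = real k * (1 - lam) * \<delta> * c + lam ^ (k+1) - lam * \<delta>"
    unfolding c_def by (simp add: algebra_simps power2_eq_square)
  have "0 < real k * (1 - lam) * \<delta> * c + lam ^ (k+1) - lam * \<delta>"
  proof (cases k)
    case 0
    then show ?thesis using assms by (simp add: mult_less_cancel_left2)
  next
    case (Suc k')
    have c0: "0 < c" using cl assms by simp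
    have "lam * (\<delta> * c) \<le> lam * lam ^ k" using k assms unfolding c_def by (intro mult_left_mono) auto
    then have a: "lam * \<delta> * c \<le> lam ^ (k+1)" by (simp add: mult.assoc)
    have k1: "1 \<le> real k" using Suc by simp
    have "0 \<le> (1 - lam) * \<delta> * c" using c0 assms by simp
    then have "1 * ((1 - lam) * \<delta> * c) \<le> real k * ((1 - lam) * \<delta> * c)"
      using k1 by (rule mult_right_mono[rotated])
    then have "(1 - lam) * \<delta> * c \<le> real k * ((1 - lam) * \<delta> * c)" by simp
    then have b: "(1 - lam) * \<delta> * c \<le> real k * (1 - lam) * \<delta> * c" by (simp add: mult.assoc)
    have "0 < \<delta> * (c - lam)" using cl assms by simp
    then show ?thesis using a b by (simp add: algebra_simps)
  qed
  moreover have "0 < lam * (1 - lam) * \<delta> * \<epsilon>" using assms by simp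
  ultimately show ?thesis unfolding Ntil_def num by simp
qed

theorem theorem2:
  fixes D :: nat and \<Psi> :: "nat \<Rightarrow> complex" and \<epsilon> \<delta> lam :: real
  assumes "D \<ge> 2" and "(\<Sum>i<D. (cmod (\<Psi> i))\<^sup>2) = 1"
    and "0 < \<epsilon>" "\<epsilon> < 1" "0 < \<delta>" "\<delta> < 1" "0 < lam" "lam < 1"
  defines "kp \<equiv> nat \<lceil>log lam \<delta>\<rceil>"
    and "km \<equiv> nat \<lfloor>log lam \<delta>\<rfloor>"
    and "kstar \<equiv> (GREATEST k::nat. \<delta> \<le> lam ^ k / ((1 - \<epsilon>) + lam * \<epsilon>))"
  shows "(\<exists>N\<ge>1. Fver D \<Psi> N \<delta> lam \<ge> 1 - \<epsilon>)
    \<and> int (Nver D \<Psi> \<epsilon> \<delta> lam) = \<lceil>INF k. Ntil \<epsilon> \<delta> lam k\<rceil>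
    \<and> int (Nver D \<Psi> \<epsilon> \<delta> lam) = \<lceil>Ntil \<epsilon> \<delta> lam kstar\<rceil>
    \<and> int (Nver D \<Psi> \<epsilon> \<delta> lam) = \<lceil>min (Ntil \<epsilon> \<delta> lam kp) (Ntil \<epsilon> \<delta> lam km)\<rceil>
    \<and> (\<delta> \<ge> lam ^ kp / ((1 - \<epsilon>) + lam * \<epsilon>) \<longrightarrow> int (Nver D \<Psi> \<epsilon> \<delta> lam) = \<lceil>Ntil \<epsilon> \<delta> lam km\<rceil>)
    \<and> (\<delta> \<le> lam ^ kp / ((1 - \<epsilon>) + lam * \<epsilon>) \<longrightarrow> int (Nver D \<Psi> \<epsilon> \<delta> lam) = \<lceil>Ntil \<epsilon> \<delta> lam kp\<rceil>)
    \<and> (\<forall>k::int. \<delta> \<le> lam powr (real_of_int k) / ((1 - \<epsilon>) + lam * \<epsilon>) \<longrightarrow> k \<le> int kstar)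
    \<and> (kstar = kp \<or> kstar = km)"
proof -
  note KF = kstar_facts[where c = "(1 - \<epsilon>) + lam * \<epsilon>" and ks = kstar and kp = kp and km = km,
      OF assms(3-8) refl kstar_def[THEN meta_eq_to_obj_eq] kp_def[THEN meta_eq_to_obj_eq] km_def[THEN meta_eq_to_obj_eq]]
  have min: "Ntil \<epsilon> \<delta> lam kstar \<le> Ntil \<epsilon> \<delta> lam k" for k
    by (rule Ntil_min[OF assms(3) assms(5) assms(7) assms(8) KF(1) KF(2)])
  have pos: "0 < Ntil \<epsilon> \<delta> lam kstar" by (rule Ntil_pos[OF assms(3-8) KF(1)])
  have iffN: "1 - \<epsilon> \<le> Fver D \<Psi> N \<delta> lam \<longleftrightarrow> Ntil \<epsilon> \<delta> lam kstar \<le> real N" if "1 \<le> N" for N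
  proof -
    have "1 - \<epsilon> \<le> Fver D \<Psi> N \<delta> lam \<longleftrightarrow> (\<exists>k. Ntil \<epsilon> \<delta> lam k \<le> real N)"
      by (rule Fver_iff[OF assms(1-8) that])
    also have "\<dots> \<longleftrightarrow> Ntil \<epsilon> \<delta> lam kstar \<le> real N" using min order_trans by blast
    finally show ?thesis .
  qed
  define n0 where "n0 = nat \<lceil>Ntil \<epsilon> \<delta> lam kstar\<rceil>"
  have c0: "0 \<le> \<lceil>Ntil \<epsilon> \<delta> lam kstar\<rceil>" using pos by simp
  have n0i: "int n0 = \<lceil>Ntil \<epsilon> \<delta> lam kstar\<rceil>" unfolding n0_def using c0 by simp
  have n01: "1 \<le> n0" unfolding n0_def using pos by (simp add: le_nat_iff)
  have n0ok: "Ntil \<epsilon> \<delta> lam kstar \<le> real n0"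
  proof -
    have "Ntil \<epsilon> \<delta> lam kstar \<le> real_of_int \<lceil>Ntil \<epsilon> \<delta> lam kstar\<rceil>" by (rule le_of_int_ceiling)
    also have "\<dots> = real n0" using n0i by (metis of_int_of_nat_eq)
    finally show ?thesis .
  qed
  have Nv: "Nver D \<Psi> \<epsilon> \<delta> lam = n0"
    unfolding Nver_def
  proof (rule Least_equality)
    show "1 \<le> n0 \<and> 1 - \<epsilon> \<le> Fver D \<Psi> n0 \<delta> lam" using n01 n0ok iffN[OF n01] by simp
  next
    fix y assume y: "1 \<le> y \<and> 1 - \<epsilon> \<le> Fver D \<Psi> y \<delta> lam"
    then have "Ntil \<epsilon> \<delta> lam kstar \<le> real y" using iffN by blast
    then have "\<lceil>Ntil \<epsilon> \<delta> lam kstar\<rceil> \<le> int y" by (simp add: ceiling_le_iff)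
    then show "n0 \<le> y" using n0i by simp
  qed
  have INF: "(INF k. Ntil \<epsilon> \<delta> lam k) = Ntil \<epsilon> \<delta> lam kstar"
  proof (rule antisym)
    show "(INF k. Ntil \<epsilon> \<delta> lam k) \<le> Ntil \<epsilon> \<delta> lam kstar"
      by (rule cINF_lower) (auto intro!: bdd_belowI[of _ "Ntil \<epsilon> \<delta> lam kstar"] simp: min)
    show "Ntil \<epsilon> \<delta> lam kstar \<le> (INF k. Ntil \<epsilon> \<delta> lam k)"
      by (rule cINF_greatest) (auto simp: min)
  qed
  have MIN: "min (Ntil \<epsilon> \<delta> lam kp) (Ntil \<epsilon> \<delta> lam km) = Ntil \<epsilon> \<delta> lam kstar"
    using KF(4) min[of kp] min[of km] by (auto simp: min_def)
  show ?thesis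
    using Nv n0i n01 n0ok iffN[OF n01] INF MIN KF(3) KF(4) KF(5) KF(6) by auto
qed

end
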